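(* Let $f_1,\dots,f_n:\mathbb{R}^d\to\mathbb{R}$ be convex and differentiable, each with $L$-Lipschitz gradient, with $f=\frac1n\sum_i f_i$ $\lambda$-strongly convex with minimizer $x^*$. Assume the sparsity structure and the asynchronous SVRG model described in the context, with staleness bound $\tau$ and sparsity constant $\Delta$. Suppose the step size $\eta>0$ and epoch size $m$ satisfy $2L^2\Delta\eta^2\tau^2<1$ and $$0<\theta_s:=\frac{\frac{1}{\lambda\eta m}+4L\,\frac{\eta+L\Delta\tau^2\eta^2}{1-2L^2\Delta\eta^2\tau^2}}{1-4L\,\frac{\eta+L\Delta\tau^2\eta^2}{1-2L^2\Delta\eta^2\tau^2}}<1,$$ with positive denominator. If the epoch-end selection probabilities are $p_j=1/m$ for all $j\in[m]$, then for every $k\ge0$, $$\mathbb{E}\big[f(\tilde x^{k+1})-f(x^* )\big]\le\theta_s\,\mathbb{E}\big[f(\tilde x^{k})-f(x^* )\big].$$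
   Context: Sparsity: each $f_i$ depends only on the coordinates of $x$ indexed by a set $e_i\subseteq[d]$. Write $\|x\|_i^2=\sum_{j\in e_i}x_j^2$, and let $\Delta$ be the smallest constant such that $\frac1n\sum_{i=1}^n\|x\|_i^2\le\Delta\|x\|^2$ for all $x\in\mathbb{R}^d$. Asynchronous SVRG model (consistent reads, bounded staleness, synchronization once per epoch): start from $x^0$, $\tilde x^0=x^0$. Epoch $k+1$ consists of global steps $t=km,\dots,km+m-1$, with $x^{km}=\tilde x^k$. At step $t$, an index $i_t$ is drawn uniformly from $[n]$, independently of all previous indices and iterates, and $$x^{t+1}=x^t+\eta u^t,\qquad u^t=-\big[\nabla f_{i_t}(x^{D(t)})-\nabla f_{i_t}(\tilde x^k)+\nabla f(\tilde x^k)\big],$$ where $D(t)$ is an integer (not depending on $i_t$) with $km\le D(t)\le t$ and $t-D(t)\le\tau$, for a fixed nonnegative integer $\tau$; i.e. the gradient is evaluated at a possibly stale earlier iterate, at most $\tau$ steps old and not older than the start of the current epoch. At the end of epoch $k+1$, $\tilde x^{k+1}$ is chosen at random from $\{x^{km},\dots,x^{km+m-1}\}$, selecting $x^{km+j-1}$ with probability $p_j$, and $x^{(k+1)m}:=\tilde x^{k+1}$. Expectations are over all random indices and selections. *)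

theory Defs
  imports "HOL-Analysis.Analysis" "HOL-Probability.Probability"
begin

definition strongly_convex_on :: "'a::real_normed_vector set \<Rightarrow> ('a \<Rightarrow> real) \<Rightarrow> real \<Rightarrow> bool" where
  "strongly_convex_on S g lam \<longleftrightarrow> convex S \<and>
     (\<forall>x\<in>S. \<forall>y\<in>S. \<forall>t::real. 0 \<le> t \<and> t \<le> 1 \<longrightarrow>
        g (t *\<^sub>R x + (1 - t) *\<^sub>R y) \<le> t * g x + (1 - t) * g y - lam / 2 * t * (1 - t) * (norm (x - y))\<^sup>2)"

definition avg_fun :: "(nat \<Rightarrow> 'a \<Rightarrow> real) \<Rightarrow> nat \<Rightarrow> 'a \<Rightarrow> real" where
  "avg_fun f n x = (1 / real n) * (\<Sum>i<n. f i x)"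

definition avg_grad :: "(nat \<Rightarrow> 'a \<Rightarrow> 'a::real_vector) \<Rightarrow> nat \<Rightarrow> 'a \<Rightarrow> 'a" where
  "avg_grad G n x = (1 / real n) *\<^sub>R (\<Sum>i<n. G i x)"

text \<open>Iterates of epoch k+1 (global steps t = k*m, ..., k*m+j), started from the snapshot xt.
  The list has length j+1; element number j is x^{k*m+j}.  I t is the sampled index i_t,
  D t is the (possibly stale) read time D(t).\<close>
primrec epoch_iters ::
  "(nat \<Rightarrow> 'a \<Rightarrow> 'a::real_vector) \<Rightarrow> nat \<Rightarrow> real \<Rightarrow> (nat \<Rightarrow> nat) \<Rightarrow> nat \<Rightarrow> (nat \<Rightarrow> nat)
    \<Rightarrow> nat \<Rightarrow> 'a \<Rightarrow> nat \<Rightarrow> 'a list" where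
  "epoch_iters G n eta D m I k xt 0 = [xt]"
| "epoch_iters G n eta D m I k xt (Suc j) =
     (let xs = epoch_iters G n eta D m I k xt j; t = k * m + j
      in xs @ [xs ! j + eta *\<^sub>R (- (G (I t) (xs ! (D t - k * m)) - G (I t) xt + avg_grad G n xt))])"

text \<open>Snapshots: x~^0 = x0, and x~^{k+1} = x^{k*m + S k} where S k in {0..m-1}
  (S k = j-1 corresponds to choosing x^{km+j-1}).\<close>
primrec snapshot ::
  "(nat \<Rightarrow> 'a \<Rightarrow> 'a::real_vector) \<Rightarrow> nat \<Rightarrow> real \<Rightarrow> (nat \<Rightarrow> nat) \<Rightarrow> nat \<Rightarrow> 'a
    \<Rightarrow> (nat \<Rightarrow> nat) \<times> (nat \<Rightarrow> nat) \<Rightarrow> nat \<Rightarrow> 'a" where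
  "snapshot G n eta D m x0 \<omega> 0 = x0"
| "snapshot G n eta D m x0 \<omega> (Suc k) =
     epoch_iters G n eta D m (fst \<omega>) k (snapshot G n eta D m x0 \<omega> k) (snd \<omega> k) ! (snd \<omega> k)"

text \<open>Probability space of all randomness: independent uniform indices i_t in [n] (first component)
  and independent uniform epoch-end selections in {0..m-1}, i.e. p_j = 1/m (second component).\<close>
definition svrg_space :: "nat \<Rightarrow> nat \<Rightarrow> ((nat \<Rightarrow> nat) \<times> (nat \<Rightarrow> nat)) measure" where
  "svrg_space n m =
     (PiM UNIV (\<lambda>_::nat. measure_pmf (pmf_of_set {..<n}))) \<Otimes>\<^sub>M
     (PiM UNIV (\<lambda>_::nat. measure_pmf (pmf_of_set {..<m})))"

end

theory Submission
  imports Defs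
begin


locale sett =
  fixes f :: "nat \<Rightarrow> real ^ 'd \<Rightarrow> real"
    and G :: "nat \<Rightarrow> real ^ 'd \<Rightarrow> real ^ 'd"
    and e :: "nat \<Rightarrow> 'd set"
    and n :: nat and L lam \<Delta> :: real and xstar :: "real ^ 'd"
  assumes n_pos: "n \<ge> 1"
    and convex: "\<And>i. i < n \<Longrightarrow> convex_on UNIV (f i)"
    and grad: "\<And>i x. i < n \<Longrightarrow> (f i has_derivative (\<lambda>h. G i x \<bullet> h)) (at x)"
    and lipschitz: "\<And>i x y. i < n \<Longrightarrow> norm (G i x - G i y) \<le> L * norm (x - y)"
    and strongly: "strongly_convex_on UNIV (avg_fun f n) lam"
    and minimizer: "\<And>x. avg_fun f n xstar \<le> avg_fun f n x"
    and sparse: "\<And>i x y. i < n \<Longrightarrow> (\<forall>j\<in>e i. x $ j = y $ j) \<Longrightarrow> f i x = f i y"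
    and Delta: "\<And>x::real ^ 'd. (1 / real n) * (\<Sum>i<n. \<Sum>j\<in>e i. (x $ j)\<^sup>2) \<le> \<Delta> * (norm x)\<^sup>2"
begin

definition P :: "nat \<Rightarrow> real ^ 'd \<Rightarrow> real ^ 'd" where
  "P i v = (\<chi> j. if j \<in> e i then v $ j else 0)"

abbreviation fa where "fa \<equiv> avg_fun f n"
abbreviation ga where "ga \<equiv> avg_grad G n"

lemma L_nonneg: "L \<ge> 0"
proof -
  obtain j :: 'd where True by blast
  have "norm (axis j (1::real)) > 0" by simp
  moreover have "0 \<le> L * norm (axis j (1::real) - 0)"
    proof -
    have "0 < n" using n_pos by simp
    from lipschitz[OF this, of "axis j 1" 0] show ?thesis
      by (meson norm_ge_zero order_trans)
  qed
  ultimately show ?thesis by (simp add: zero_le_mult_iff)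
qed

lemma Delta_nonneg: "\<Delta> \<ge> 0"
proof -
  obtain j :: 'd where True by blast
  let ?x = "axis j (1::real)"
  have "0 \<le> (1 / real n) * (\<Sum>i<n. \<Sum>j\<in>e i. (?x $ j)\<^sup>2)"
    by (intro mult_nonneg_nonneg sum_nonneg) auto
  also have "\<dots> \<le> \<Delta> * (norm ?x)\<^sup>2" by (rule Delta)
  finally show ?thesis by simp
qed

lemma line_deriv:
  assumes "i < n"
  shows "((\<lambda>s. f i (x + s *\<^sub>R h)) has_real_derivative (G i (x + s *\<^sub>R h) \<bullet> h)) (at s)"
proof -
  have l: "((\<lambda>s. x + s *\<^sub>R h) has_derivative (\<lambda>t. t *\<^sub>R h)) (at s)"
    by (auto intro!: derivative_eq_intros)
  have "((\<lambda>s. f i (x + s *\<^sub>R h)) has_derivative (\<lambda>t. G i (x + s *\<^sub>R h) \<bullet> (t *\<^sub>R h))) (at s)"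
    using has_derivative_compose[OF l grad[OF assms]] by simp
  moreover have "(\<lambda>t. t * (G i (x + s *\<^sub>R h) \<bullet> h)) = (*) (G i (x + s *\<^sub>R h) \<bullet> h)"
    by (auto simp: mult.commute)
  ultimately show ?thesis
    unfolding has_field_derivative_def by simp
qed

lemma G_off:
  assumes "i < n" "j \<notin> e i"
  shows "G i x $ j = 0"
proof -
  have c: "(\<lambda>s. f i (x + s *\<^sub>R axis j 1)) = (\<lambda>s. f i x)"
  proof
    fix s
    show "f i (x + s *\<^sub>R axis j 1) = f i x"
      using assms by (intro sparse) (auto simp: axis_def)
  qed
  have "((\<lambda>s. f i x) has_real_derivative (G i x \<bullet> axis j 1)) (at 0)"
    using line_deriv[OF assms(1), of x "axis j 1" 0] c by simp
  moreover have "((\<lambda>s. f i x) has_real_derivative 0) (at 0)" by simp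
  ultimately have "G i x \<bullet> axis j 1 = 0" using DERIV_unique by blast
  then show ?thesis by (simp add: inner_axis)
qed

lemma G_local:
  assumes "i < n" "\<forall>j\<in>e i. x $ j = y $ j"
  shows "G i x = G i y"
proof -
  have dir: "G i x \<bullet> h = G i y \<bullet> h" for h
  proof -
    have c: "(\<lambda>s. f i (x + s *\<^sub>R h)) = (\<lambda>s. f i (y + s *\<^sub>R h))"
      using assms by (intro ext sparse) auto
    have "((\<lambda>s. f i (y + s *\<^sub>R h)) has_real_derivative (G i x \<bullet> h)) (at 0)"
      using line_deriv[OF assms(1), of x h 0] c by simp
    moreover have "((\<lambda>s. f i (y + s *\<^sub>R h)) has_real_derivative (G i y \<bullet> h)) (at 0)"
      using line_deriv[OF assms(1), of y h 0] by simp
    ultimately show ?thesis using DERIV_unique by blast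
  qed
  have "(G i x - G i y) \<bullet> (G i x - G i y) = 0"
    using dir[of "G i x - G i y"] by (simp add: inner_diff_left)
  then show ?thesis by simp
qed

lemma G_inner_P:
  assumes "i < n"
  shows "G i x \<bullet> v = G i x \<bullet> P i v"
  unfolding inner_vec_def P_def
  by (intro sum.cong) (auto simp: G_off[OF assms])

lemma normP2: "(norm (P i v))\<^sup>2 = (\<Sum>j\<in>e i. (v $ j)\<^sup>2)"
proof -
  have "(norm (P i v))\<^sup>2 = (\<Sum>j\<in>UNIV. (if j \<in> e i then (v $ j)\<^sup>2 else 0))"
    unfolding power2_norm_eq_inner inner_vec_def P_def
    by (intro sum.cong) (auto simp: power2_eq_square)
  also have "\<dots> = (\<Sum>j\<in>e i. (v $ j)\<^sup>2)"
    by (simp add: sum.If_cases)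
  finally show ?thesis .
qed

lemma avg_P: "(1 / real n) * (\<Sum>i<n. (norm (P i v))\<^sup>2) \<le> \<Delta> * (norm v)\<^sup>2"
  using Delta[of v] by (simp add: normP2)

lemma normP_le: "norm (P i v) \<le> norm v"
proof -
  have "(norm (P i v))\<^sup>2 \<le> (norm v)\<^sup>2"
    unfolding power2_norm_eq_inner inner_vec_def P_def
    by (intro sum_mono) auto
  then show ?thesis by (simp add: power_mono_iff)
qed

lemma G_lipP:
  assumes "i < n"
  shows "norm (G i x - G i y) \<le> L * norm (P i (x - y))"
proof -
  define z where "z = (\<chi> j. if j \<in> e i then x $ j else y $ j)"
  have "G i z = G i x" using assms by (intro G_local) (auto simp: z_def)
  moreover have "z - y = P i (x - y)" by (auto simp: z_def P_def vec_eq_iff)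
  ultimately show ?thesis using lipschitz[OF assms, of z y] by simp
qed

lemma P_scale: "P i (s *\<^sub>R v) = s *\<^sub>R P i v"
  by (auto simp: P_def vec_eq_iff)

lemma descent_i:
  assumes i: "i < n"
  shows "f i y \<le> f i x + G i x \<bullet> (y - x) + L / 2 * (norm (P i (y - x)))\<^sup>2"
proof -
  define h where "h = y - x"
  define c where "c = (norm (P i h))\<^sup>2"
  define \<psi> where "\<psi> s = f i (x + s *\<^sub>R h) - s * (G i x \<bullet> h) - L / 2 * s\<^sup>2 * c" for s
  have d: "(\<psi> has_real_derivative (G i (x + s *\<^sub>R h) \<bullet> h - G i x \<bullet> h - L * s * c)) (at s)" for s
    unfolding \<psi>_def
    by (auto intro!: derivative_eq_intros line_deriv[OF i] simp: power2_eq_square)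
  have le: "G i (x + s *\<^sub>R h) \<bullet> h - G i x \<bullet> h - L * s * c \<le> 0" if "0 \<le> s" for s
  proof -
    have "G i (x + s *\<^sub>R h) \<bullet> h - G i x \<bullet> h = (G i (x + s *\<^sub>R h) - G i x) \<bullet> P i h"
      using G_inner_P[OF i] by (simp add: inner_diff_left)
    also have "\<dots> \<le> norm (G i (x + s *\<^sub>R h) - G i x) * norm (P i h)"
      by (rule Cauchy_Schwarz_ineq2[THEN order_trans[OF abs_ge_self]])
    also have "\<dots> \<le> L * norm (P i (s *\<^sub>R h)) * norm (P i h)"
      using G_lipP[OF i, of "x + s *\<^sub>R h" x] by (intro mult_right_mono) auto
    also have "\<dots> = L * s * c" using that by (simp add: P_scale c_def power2_eq_square)
    finally show ?thesis by simp
  qed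
  have "\<psi> 0 \<ge> \<psi> 1"
    by (rule DERIV_nonpos_imp_nonincreasing[of 0 1]) (use d le in fastforce)+
  then show ?thesis by (simp add: \<psi>_def h_def c_def)
qed

lemma tangent_i:
  assumes i: "i < n"
  shows "f i y \<ge> f i x + G i x \<bullet> (y - x)"
proof -
  define h where "h = y - x"
  define \<phi> where "\<phi> s = f i (x + s *\<^sub>R h)" for s
  have cv: "convex_on UNIV \<phi>"
  proof (rule convex_onI)
    fix t a b :: real assume t: "0 < t" "t < 1"
    have "\<phi> ((1 - t) *\<^sub>R a + t *\<^sub>R b) = f i ((1 - t) *\<^sub>R (x + a *\<^sub>R h) + t *\<^sub>R (x + b *\<^sub>R h))"
      unfolding \<phi>_def by (simp add: algebra_simps)
    also have "\<dots> \<le> (1 - t) * \<phi> a + t * \<phi> b"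
      unfolding \<phi>_def using t by (intro convex_onD[OF convex[OF i]]) auto
    finally show "\<phi> ((1 - t) *\<^sub>R a + t *\<^sub>R b) \<le> (1 - t) * \<phi> a + t * \<phi> b" .
  qed auto
  have d: "(\<phi> has_real_derivative (G i x \<bullet> h)) (at 0 within UNIV)"
    using line_deriv[OF i, of x h 0] unfolding \<phi>_def by simp
  have "\<phi> 1 - \<phi> 0 \<ge> (G i x \<bullet> h) * (1 - 0)"
    by (rule convex_on_imp_above_tangent[OF cv _ _ _ d]) auto
  then show ?thesis by (simp add: \<phi>_def h_def)
qed

lemma fa_eq: "fa = (\<lambda>x. (1 / real n) * (\<Sum>i<n. f i x))"
  by (simp add: avg_fun_def[abs_def])

lemma ga_inner: "ga x \<bullet> h = (1 / real n) * (\<Sum>i<n. G i x \<bullet> h)"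
  by (simp add: avg_grad_def inner_sum_left)

lemma fa_deriv: "(fa has_derivative (\<lambda>h. ga x \<bullet> h)) (at x)"
proof -
  have "((\<lambda>x. (1 / real n) * (\<Sum>i<n. f i x)) has_derivative
      (\<lambda>h. (1 / real n) * (\<Sum>i<n. G i x \<bullet> h))) (at x)"
    by (intro has_derivative_mult_right has_derivative_sum grad) auto
  then show ?thesis by (simp add: fa_eq ga_inner)
qed

lemma ga_xstar: "ga xstar = 0"
proof -
  have "(\<lambda>h. ga xstar \<bullet> h) = (\<lambda>v. 0)"
    by (rule differential_zero_maxmin[of xstar UNIV, OF _ _ fa_deriv]) (auto intro: minimizer)
  then have "ga xstar \<bullet> ga xstar = 0" by metis
  then show ?thesis by simp
qed

lemma fa_descent: "fa y \<le> fa x + ga x \<bullet> (y - x) + L * \<Delta> / 2 * (norm (y - x))\<^sup>2"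
proof -
  have "(\<Sum>i<n. f i y) \<le> (\<Sum>i<n. f i x + G i x \<bullet> (y - x) + L / 2 * (norm (P i (y - x)))\<^sup>2)"
    by (intro sum_mono descent_i) auto
  then have "fa y \<le> (1 / real n) * (\<Sum>i<n. f i x + G i x \<bullet> (y - x) + L / 2 * (norm (P i (y - x)))\<^sup>2)"
    by (simp add: fa_eq divide_right_mono)
  also have "\<dots> = fa x + ga x \<bullet> (y - x) + L / 2 * ((1 / real n) * (\<Sum>i<n. (norm (P i (y - x)))\<^sup>2))"
  proof -
    have "(\<Sum>i<n. f i x + G i x \<bullet> (y - x) + L / 2 * (norm (P i (y - x)))\<^sup>2)
      = (\<Sum>i<n. f i x) + (\<Sum>i<n. G i x \<bullet> (y - x)) + L / 2 * (\<Sum>i<n. (norm (P i (y - x)))\<^sup>2)"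
      by (simp add: sum.distrib sum_distrib_left)
    then show ?thesis by (simp add: fa_eq ga_inner distrib_left)
  qed
  also have "\<dots> \<le> fa x + ga x \<bullet> (y - x) + L / 2 * (\<Delta> * (norm (y - x))\<^sup>2)"
    using avg_P L_nonneg by (intro add_left_mono mult_left_mono) auto
  finally show ?thesis by simp
qed

lemma fa_tangent: "fa y \<ge> fa x + ga x \<bullet> (y - x)"
proof -
  have "(\<Sum>i<n. f i x + G i x \<bullet> (y - x)) \<le> (\<Sum>i<n. f i y)"
    by (intro sum_mono tangent_i) auto
  then have "(1 / real n) * (\<Sum>i<n. f i x + G i x \<bullet> (y - x)) \<le> fa y"
    by (simp add: fa_eq divide_right_mono)
  moreover have "(\<Sum>i<n. f i x + G i x \<bullet> (y - x)) = (\<Sum>i<n. f i x) + (\<Sum>i<n. G i x \<bullet> (y - x))"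
    by (simp add: sum.distrib)
  ultimately show ?thesis by (simp add: fa_eq ga_inner distrib_left)
qed

lemma cocoercive_i:
  assumes i: "i < n" and Lp: "L > 0"
  shows "(norm (G i x - G i z))\<^sup>2 / (2 * L) \<le> f i x - f i z - G i z \<bullet> (x - z)"
proof -
  define w where "w = G i x - G i z"
  define y where "y = x - (1 / L) *\<^sub>R w"
  have t: "f i y \<ge> f i z + G i z \<bullet> (y - z)" by (rule tangent_i[OF i])
  have "f i y \<le> f i x + G i x \<bullet> (y - x) + L / 2 * (norm (P i (y - x)))\<^sup>2" by (rule descent_i[OF i])
  also have "\<dots> \<le> f i x + G i x \<bullet> (y - x) + L / 2 * (norm (y - x))\<^sup>2"
    using Lp normP_le[of i "y - x"] by (intro add_left_mono mult_left_mono power_mono) auto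
  finally have d: "f i y \<le> f i x + G i x \<bullet> (y - x) + L / 2 * (norm (y - x))\<^sup>2" .
  have e1: "G i x \<bullet> (y - x) = - (1 / L) * (G i x \<bullet> w)" by (simp add: y_def)
  have e2: "G i z \<bullet> (y - z) = G i z \<bullet> (x - z) - (1 / L) * (G i z \<bullet> w)"
    by (simp add: y_def inner_diff_right)
  have e3: "(norm (y - x))\<^sup>2 = (1 / L)\<^sup>2 * (norm w)\<^sup>2"
    by (simp add: y_def power_mult_distrib power2_eq_square)
  have e4: "G i x \<bullet> w - G i z \<bullet> w = (norm w)\<^sup>2"
    by (simp add: w_def inner_diff_left power2_norm_eq_inner)
  from t d have "f i z + G i z \<bullet> (x - z) - (1 / L) * (G i z \<bullet> w)
      \<le> f i x - (1 / L) * (G i x \<bullet> w) + L / 2 * ((1 / L)\<^sup>2 * (norm w)\<^sup>2)"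
    by (simp add: e1 e2 e3)
  then have "(1 / L) * (G i x \<bullet> w - G i z \<bullet> w) - L / 2 * ((1 / L)\<^sup>2 * (norm w)\<^sup>2)
      \<le> f i x - f i z - G i z \<bullet> (x - z)"
    by (simp add: algebra_simps)
  moreover have "(1 / L) * (G i x \<bullet> w - G i z \<bullet> w) - L / 2 * ((1 / L)\<^sup>2 * (norm w)\<^sup>2)
      = (norm w)\<^sup>2 / (2 * L)"
    using Lp by (simp add: e4 power2_eq_square field_simps)
  ultimately show ?thesis by (simp add: w_def)
qed

lemma var_bound: "(1 / real n) * (\<Sum>i<n. (norm (G i x - G i xstar))\<^sup>2) \<le> 2 * L * (fa x - fa xstar)"
proof (cases "L = 0")
  case True
  have "G i x = G i xstar" if "i < n" for i
    using lipschitz[OF that, of x xstar] True by simp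
  then show ?thesis using True minimizer[of x] by simp
next
  case False
  then have Lp: "L > 0" using L_nonneg by simp
  have "(\<Sum>i<n. (norm (G i x - G i xstar))\<^sup>2 / (2 * L))
      \<le> (\<Sum>i<n. f i x - f i xstar - G i xstar \<bullet> (x - xstar))"
    by (intro sum_mono cocoercive_i Lp) auto
  also have "\<dots> = real n * (fa x - fa xstar) - real n * (ga xstar \<bullet> (x - xstar))"
    using n_pos by (simp add: fa_eq ga_inner sum_subtractf right_diff_distrib)
  also have "\<dots> = real n * (fa x - fa xstar)" by (simp add: ga_xstar)
  finally have "(\<Sum>i<n. (norm (G i x - G i xstar))\<^sup>2) / (2 * L) \<le> real n * (fa x - fa xstar)"
    by (simp add: sum_divide_distrib)
  then show ?thesis using Lp n_pos by (simp add: field_simps)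
qed

lemma sq_tri: "(norm (u + v))\<^sup>2 \<le> 2 * (norm u)\<^sup>2 + 2 * (norm (v::real^'d))\<^sup>2"
proof -
  have "norm (u + v) \<le> norm u + norm v" by (rule norm_triangle_ineq)
  then have "(norm (u + v))\<^sup>2 \<le> (norm u + norm v)\<^sup>2" by (simp add: power_mono)
  also have "\<dots> \<le> 2 * (norm u)\<^sup>2 + 2 * (norm v)\<^sup>2"
    using sum_squares_ge_zero[of "norm u - norm v" 0]
    by (simp add: power2_eq_square algebra_simps)
  finally show ?thesis .
qed

lemma variance_le:
  fixes u :: "nat \<Rightarrow> real ^ 'd"
  shows "(\<Sum>i<n. (norm (u i - (1 / real n) *\<^sub>R (\<Sum>j<n. u j)))\<^sup>2) \<le> (\<Sum>i<n. (norm (u i))\<^sup>2)"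
proof -
  define b where "b = (1 / real n) *\<^sub>R (\<Sum>j<n. u j)"
  have sb: "(\<Sum>j<n. u j) = real n *\<^sub>R b" using n_pos by (simp add: b_def)
  have "(\<Sum>i<n. (norm (u i - b))\<^sup>2) = (\<Sum>i<n. (norm (u i))\<^sup>2 - 2 * (u i \<bullet> b) + (norm b)\<^sup>2)"
    by (intro sum.cong) (auto simp: power2_norm_eq_inner inner_diff_left inner_diff_right inner_commute)
  also have "\<dots> = (\<Sum>i<n. (norm (u i))\<^sup>2) - 2 * ((\<Sum>i<n. u i) \<bullet> b) + real n * (norm b)\<^sup>2"
    by (simp add: sum.distrib sum_subtractf inner_sum_left sum_distrib_left)
  also have "\<dots> = (\<Sum>i<n. (norm (u i))\<^sup>2) - real n * (norm b)\<^sup>2"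
    by (simp add: sb power2_norm_eq_inner)
  also have "\<dots> \<le> (\<Sum>i<n. (norm (u i))\<^sup>2)" by simp
  finally show ?thesis by (simp add: b_def)
qed

lemma g_bound:
  "(1 / real n) * (\<Sum>i<n. (norm (G i yh - G i X + ga X))\<^sup>2)
    \<le> 2 * L\<^sup>2 * \<Delta> * (norm (yh - y))\<^sup>2 + 8 * L * (fa y - fa xstar) + 8 * L * (fa X - fa xstar)"
proof -
  define u where "u i = G i X - G i xstar" for i
  have gaX: "ga X = (1 / real n) *\<^sub>R (\<Sum>j<n. u j)"
  proof -
    have "ga X = ga X - ga xstar" by (simp add: ga_xstar)
    also have "\<dots> = (1 / real n) *\<^sub>R (\<Sum>j<n. u j)"
      by (simp add: avg_grad_def u_def sum_subtractf scaleR_diff_right)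
    finally show ?thesis .
  qed
  have pt: "(norm (G i yh - G i X + ga X))\<^sup>2 \<le> 2 * (norm (G i yh - G i y))\<^sup>2
      + 4 * (norm (G i y - G i xstar))\<^sup>2 + 4 * (norm (u i - ga X))\<^sup>2" for i
  proof -
    have "G i yh - G i X + ga X = (G i yh - G i y) + ((G i y - G i xstar) + - (u i - ga X))"
      by (simp add: u_def algebra_simps)
    then have "(norm (G i yh - G i X + ga X))\<^sup>2 \<le> 2 * (norm (G i yh - G i y))\<^sup>2
        + 2 * (norm ((G i y - G i xstar) + - (u i - ga X)))\<^sup>2"
      using sq_tri by metis
    also have "\<dots> \<le> 2 * (norm (G i yh - G i y))\<^sup>2
        + 2 * (2 * (norm (G i y - G i xstar))\<^sup>2 + 2 * (norm (- (u i - ga X)))\<^sup>2)"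
      using sq_tri by (intro add_left_mono mult_left_mono) auto
    finally show ?thesis by (simp add: norm_minus_commute)
  qed
  have s1: "(1 / real n) * (\<Sum>i<n. (norm (G i yh - G i y))\<^sup>2) \<le> L\<^sup>2 * (\<Delta> * (norm (yh - y))\<^sup>2)"
  proof -
    have "(\<Sum>i<n. (norm (G i yh - G i y))\<^sup>2) \<le> (\<Sum>i<n. L\<^sup>2 * (norm (P i (yh - y)))\<^sup>2)"
    proof (intro sum_mono)
      fix i assume "i \<in> {..<n}"
      then have "norm (G i yh - G i y) \<le> L * norm (P i (yh - y))" using G_lipP by auto
      then have "(norm (G i yh - G i y))\<^sup>2 \<le> (L * norm (P i (yh - y)))\<^sup>2"
        by (intro power_mono) auto
      then show "(norm (G i yh - G i y))\<^sup>2 \<le> L\<^sup>2 * (norm (P i (yh - y)))\<^sup>2"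
        by (simp add: power_mult_distrib)
    qed
    then have "(1 / real n) * (\<Sum>i<n. (norm (G i yh - G i y))\<^sup>2)
        \<le> L\<^sup>2 * ((1 / real n) * (\<Sum>i<n. (norm (P i (yh - y)))\<^sup>2))"
      by (simp add: sum_distrib_left[symmetric] divide_right_mono)
    also have "\<dots> \<le> L\<^sup>2 * (\<Delta> * (norm (yh - y))\<^sup>2)"
      by (intro mult_left_mono avg_P) auto
    finally show ?thesis .
  qed
  have s2: "(1 / real n) * (\<Sum>i<n. (norm (G i y - G i xstar))\<^sup>2) \<le> 2 * L * (fa y - fa xstar)"
    by (rule var_bound)
  have s3: "(1 / real n) * (\<Sum>i<n. (norm (u i - ga X))\<^sup>2) \<le> 2 * L * (fa X - fa xstar)"
  proof -
    have "(\<Sum>i<n. (norm (u i - ga X))\<^sup>2) \<le> (\<Sum>i<n. (norm (u i))\<^sup>2)"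
      unfolding gaX by (rule variance_le)
    then have "(1 / real n) * (\<Sum>i<n. (norm (u i - ga X))\<^sup>2) \<le> (1 / real n) * (\<Sum>i<n. (norm (u i))\<^sup>2)"
      by (intro mult_left_mono) auto
    also have "\<dots> \<le> 2 * L * (fa X - fa xstar)" unfolding u_def by (rule var_bound)
    finally show ?thesis .
  qed
  have "(1 / real n) * (\<Sum>i<n. (norm (G i yh - G i X + ga X))\<^sup>2)
      \<le> (1 / real n) * (\<Sum>i<n. 2 * (norm (G i yh - G i y))\<^sup>2
      + 4 * (norm (G i y - G i xstar))\<^sup>2 + 4 * (norm (u i - ga X))\<^sup>2)"
    by (intro mult_left_mono sum_mono pt) auto
  also have "\<dots> = 2 * ((1 / real n) * (\<Sum>i<n. (norm (G i yh - G i y))\<^sup>2))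
      + 4 * ((1 / real n) * (\<Sum>i<n. (norm (G i y - G i xstar))\<^sup>2))
      + 4 * ((1 / real n) * (\<Sum>i<n. (norm (u i - ga X))\<^sup>2))"
    by (simp add: sum.distrib sum_distrib_left[symmetric] algebra_simps)
  also have "\<dots> \<le> 2 * (L\<^sup>2 * (\<Delta> * (norm (yh - y))\<^sup>2)) + 4 * (2 * L * (fa y - fa xstar))
      + 4 * (2 * L * (fa X - fa xstar))"
    using s1 s2 s3 by linarith
  finally show ?thesis by (simp add: algebra_simps)
qed

lemma inner_bound:
  "(y - xstar) \<bullet> ga yh \<ge> fa y - fa xstar - L * \<Delta> / 2 * (norm (y - yh))\<^sup>2"
proof -
  have a: "fa xstar \<ge> fa yh + ga yh \<bullet> (xstar - yh)" by (rule fa_tangent)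
  have b: "fa y \<le> fa yh + ga yh \<bullet> (y - yh) + L * \<Delta> / 2 * (norm (y - yh))\<^sup>2" by (rule fa_descent)
  have "(y - xstar) \<bullet> ga yh = ga yh \<bullet> (y - yh) - ga yh \<bullet> (xstar - yh)"
    by (simp add: inner_commute inner_diff_left)
  then show ?thesis using a b by linarith
qed

lemma strong_bound: "lam / 2 * (norm (X - xstar))\<^sup>2 \<le> fa X - fa xstar"
proof (rule ccontr)
  define c where "c = lam / 2 * (norm (X - xstar))\<^sup>2"
  define F where "F = fa X - fa xstar"
  assume "\<not> c \<le> F"
  then have cF: "F < c" by (simp add: c_def F_def)
  have F0: "F \<ge> 0" using minimizer[of X] by (simp add: F_def)
  then have c0: "c > 0" using cF by simp
  define t where "t = (c - F) / (2 * c)"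
  have t0: "0 < t" and t1: "t \<le> 1" using cF c0 F0 by (auto simp: t_def field_simps)
  have "fa xstar \<le> fa (t *\<^sub>R X + (1 - t) *\<^sub>R xstar)" by (rule minimizer)
  also have "\<dots> \<le> t * fa X + (1 - t) * fa xstar - lam / 2 * t * (1 - t) * (norm (X - xstar))\<^sup>2"
    using strongly t0 t1 unfolding strongly_convex_on_def by auto
  finally have "t * c * (1 - t) \<le> t * F" by (simp add: c_def F_def algebra_simps)
  then have "c * (1 - t) \<le> F" using t0 by (simp add: mult.assoc)
  moreover have "c * (1 - t) = (c + F) / 2" using c0 by (simp add: t_def field_simps)
  ultimately show False using cF by simp
qed

end



lemma window_sum:
  fixes Gb :: "nat \<Rightarrow> real" and d :: "nat \<Rightarrow> nat"
  assumes dj: "\<And>j. j < m \<Longrightarrow> d j \<le> j \<and> j \<le> d j + \<tau>"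
    and Gb0: "\<And>j. Gb j \<ge> 0"
  shows "(\<Sum>j<m. \<Sum>s\<in>{d j..<j}. Gb s) \<le> real \<tau> * (\<Sum>s<m. Gb s)"
proof -
  have "(\<Sum>j<m. \<Sum>s\<in>{d j..<j}. Gb s) = (\<Sum>j<m. \<Sum>s<m. (if d j \<le> s \<and> s < j then Gb s else 0))"
  proof (rule sum.cong[OF refl])
    fix j assume "j \<in> {..<m}"
    then have "{d j..<j} = {s\<in>{..<m}. d j \<le> s \<and> s < j}" by auto
    then show "(\<Sum>s\<in>{d j..<j}. Gb s) = (\<Sum>s<m. (if d j \<le> s \<and> s < j then Gb s else 0))"
      by (simp add: sum.If_cases Int_def)
  qed
  also have "\<dots> = (\<Sum>s<m. \<Sum>j<m. (if d j \<le> s \<and> s < j then Gb s else 0))"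
    by (rule sum.swap)
  also have "\<dots> = (\<Sum>s<m. Gb s * real (card {j\<in>{..<m}. d j \<le> s \<and> s < j}))"
    by (rule sum.cong[OF refl]) (simp add: sum.If_cases Int_def)
  also have "\<dots> \<le> (\<Sum>s<m. Gb s * real \<tau>)"
  proof (intro sum_mono mult_left_mono Gb0)
    fix s assume "s \<in> {..<m}"
    have "{j\<in>{..<m}. d j \<le> s \<and> s < j} \<subseteq> {s<..s + \<tau>}"
      using dj by fastforce
    then have "card {j\<in>{..<m}. d j \<le> s \<and> s < j} \<le> card {s<..s + \<tau>}"
      by (intro card_mono) auto
    then show "real (card {j\<in>{..<m}. d j \<le> s \<and> s < j}) \<le> real \<tau>" by simp
  qed
  finally show ?thesis by (simp add: sum_distrib_left mult.commute)
qed

lemma seq_bound: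
  fixes a F r Gb :: "nat \<Rightarrow> real" and d :: "nat \<Rightarrow> nat" and \<tau> :: nat
  assumes m: "m \<ge> 1" and eta: "\<eta> > 0" and lam: "lam > 0" and L0: "L \<ge> 0" and D0: "\<Delta> \<ge> 0"
    and step: "\<And>j. j < m \<Longrightarrow> a (Suc j) \<le> a j - 2 * \<eta> * F j + \<eta> * L * \<Delta> * r j + \<eta>\<^sup>2 * Gb j"
    and rb: "\<And>j. j < m \<Longrightarrow> r j \<le> real \<tau> * \<eta>\<^sup>2 * (\<Sum>s\<in>{d j..<j}. Gb s)"
    and dj: "\<And>j. j < m \<Longrightarrow> d j \<le> j \<and> j \<le> d j + \<tau>"
    and gb: "\<And>j. j < m \<Longrightarrow> Gb j \<le> 2 * L\<^sup>2 * \<Delta> * r j + 8 * L * F j + 8 * L * Ft"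
    and Gb0: "\<And>j. Gb j \<ge> 0"
    and a0: "a 0 \<le> 2 / lam * Ft" and am: "a m \<ge> 0"
    and q: "2 * L\<^sup>2 * \<Delta> * \<eta>\<^sup>2 * (real \<tau>)\<^sup>2 < 1"
    and den: "1 - 4 * L * ((\<eta> + L * \<Delta> * (real \<tau>)\<^sup>2 * \<eta>\<^sup>2) / (1 - 2 * L\<^sup>2 * \<Delta> * \<eta>\<^sup>2 * (real \<tau>)\<^sup>2)) > 0"
  shows "(\<Sum>j<m. F j) \<le> real m * ((1 / (lam * \<eta> * real m)
                 + 4 * L * ((\<eta> + L * \<Delta> * (real \<tau>)\<^sup>2 * \<eta>\<^sup>2) / (1 - 2 * L\<^sup>2 * \<Delta> * \<eta>\<^sup>2 * (real \<tau>)\<^sup>2)))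
               / (1 - 4 * L * ((\<eta> + L * \<Delta> * (real \<tau>)\<^sup>2 * \<eta>\<^sup>2) / (1 - 2 * L\<^sup>2 * \<Delta> * \<eta>\<^sup>2 * (real \<tau>)\<^sup>2)))) * Ft"
proof -
  define SG where "SG = (\<Sum>j<m. Gb j)"
  define SF where "SF = (\<Sum>j<m. F j)"
  define SR where "SR = (\<Sum>j<m. r j)"
  define qq where "qq = 2 * L\<^sup>2 * \<Delta> * \<eta>\<^sup>2 * (real \<tau>)\<^sup>2"
  define c where "c = (\<eta> + L * \<Delta> * (real \<tau>)\<^sup>2 * \<eta>\<^sup>2) / (1 - qq)"
  have qq1: "qq < 1" using q by (simp add: qq_def)
  have c0: "c \<ge> 0" using qq1 eta L0 D0 by (simp add: c_def)
  have SG0: "SG \<ge> 0" unfolding SG_def by (intro sum_nonneg Gb0)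
  have SR: "SR \<le> (real \<tau>)\<^sup>2 * \<eta>\<^sup>2 * SG"
  proof -
    have "SR \<le> (\<Sum>j<m. real \<tau> * \<eta>\<^sup>2 * (\<Sum>s\<in>{d j..<j}. Gb s))"
      unfolding SR_def by (intro sum_mono rb) auto
    also have "\<dots> = real \<tau> * \<eta>\<^sup>2 * (\<Sum>j<m. \<Sum>s\<in>{d j..<j}. Gb s)"
      by (simp add: sum_distrib_left)
    also have "\<dots> \<le> real \<tau> * \<eta>\<^sup>2 * (real \<tau> * SG)"
      unfolding SG_def by (intro mult_left_mono window_sum dj Gb0) auto
    finally show ?thesis by (simp add: power2_eq_square mult_ac)
  qed
  have SGb: "SG \<le> 2 * L\<^sup>2 * \<Delta> * SR + 8 * L * SF + 8 * L * real m * Ft"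
  proof -
    have "SG \<le> (\<Sum>j<m. 2 * L\<^sup>2 * \<Delta> * r j + 8 * L * F j + 8 * L * Ft)"
      unfolding SG_def by (intro sum_mono gb) auto
    also have "\<dots> = 2 * L\<^sup>2 * \<Delta> * SR + 8 * L * SF + 8 * L * real m * Ft"
      by (simp add: SR_def SF_def sum.distrib sum_distrib_left)
    finally show ?thesis .
  qed
  have "2 * L\<^sup>2 * \<Delta> * SR \<le> 2 * L\<^sup>2 * \<Delta> * ((real \<tau>)\<^sup>2 * \<eta>\<^sup>2 * SG)"
    using SR D0 by (intro mult_left_mono) auto
  then have "SG \<le> qq * SG + 8 * L * (SF + real m * Ft)"
    using SGb by (simp add: qq_def algebra_simps)
  then have SG1: "(1 - qq) * SG \<le> 8 * L * (SF + real m * Ft)" by (simp add: algebra_simps)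
  have SG2: "SG \<le> 8 * L * (SF + real m * Ft) / (1 - qq)"
    using SG1 qq1 by (simp add: field_simps)
  have tel: "a m - a 0 \<le> - 2 * \<eta> * SF + \<eta> * L * \<Delta> * SR + \<eta>\<^sup>2 * SG"
  proof -
    have "a m - a 0 = (\<Sum>j<m. a (Suc j) - a j)" by (simp add: sum_lessThan_telescope)
    also have "\<dots> \<le> (\<Sum>j<m. - 2 * \<eta> * F j + \<eta> * L * \<Delta> * r j + \<eta>\<^sup>2 * Gb j)"
      by (intro sum_mono) (use step in force)
    also have "\<dots> = - 2 * \<eta> * SF + \<eta> * L * \<Delta> * SR + \<eta>\<^sup>2 * SG"
      unfolding SF_def SR_def SG_def sum.distrib sum_distrib_left[symmetric] by simp
    finally show ?thesis .
  qed
  have "\<eta> * L * \<Delta> * SR \<le> \<eta> * L * \<Delta> * ((real \<tau>)\<^sup>2 * \<eta>\<^sup>2 * SG)"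
    using SR eta L0 D0 by (intro mult_left_mono) auto
  then have "a m - a 0 \<le> - 2 * \<eta> * SF + \<eta> * (\<eta> + L * \<Delta> * (real \<tau>)\<^sup>2 * \<eta>\<^sup>2) * SG"
    using tel by (simp add: algebra_simps power2_eq_square)
  also have "\<eta> * (\<eta> + L * \<Delta> * (real \<tau>)\<^sup>2 * \<eta>\<^sup>2) * SG
      \<le> \<eta> * (\<eta> + L * \<Delta> * (real \<tau>)\<^sup>2 * \<eta>\<^sup>2) * (8 * L * (SF + real m * Ft) / (1 - qq))"
    using SG2 eta L0 D0 by (intro mult_left_mono) auto
  also have "\<eta> * (\<eta> + L * \<Delta> * (real \<tau>)\<^sup>2 * \<eta>\<^sup>2) * (8 * L * (SF + real m * Ft) / (1 - qq))
      = 8 * L * \<eta> * c * (SF + real m * Ft)"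
    by (simp add: c_def)
  finally have "0 \<le> 2 / lam * Ft - 2 * \<eta> * SF + 8 * L * \<eta> * c * (SF + real m * Ft)"
    using a0 am by linarith
  then have key: "2 * \<eta> * (1 - 4 * L * c) * SF \<le> (2 / lam + 8 * L * \<eta> * c * real m) * Ft"
    by (simp add: algebra_simps)
  have den': "1 - 4 * L * c > 0" using den by (simp add: c_def qq_def)
  have "SF \<le> (2 / lam + 8 * L * \<eta> * c * real m) * Ft / (2 * \<eta> * (1 - 4 * L * c))"
    using key den' eta by (simp add: field_simps)
  also have "\<dots> = real m * ((1 / (lam * \<eta> * real m) + 4 * L * c) / (1 - 4 * L * c)) * Ft"
    using m eta lam den' by (simp add: field_simps)
  finally show ?thesis by (simp add: SF_def c_def qq_def)
qed




lemma ei_length: "length (epoch_iters G n eta D m I k xt j) = Suc j"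
  by (induction j) (simp_all add: Let_def)

lemma ei_prefix: "i \<le> j \<Longrightarrow> epoch_iters G n eta D m I k xt j ! i = epoch_iters G n eta D m I k xt i ! i"
proof (induction j)
  case 0 then show ?case by simp
next
  case (Suc j)
  show ?case
  proof (cases "i \<le> j")
    case True
    then have "epoch_iters G n eta D m I k xt (Suc j) ! i = epoch_iters G n eta D m I k xt j ! i"
      by (simp add: Let_def nth_append ei_length)
    then show ?thesis using Suc True by simp
  next
    case False
    then have "i = Suc j" using Suc by simp
    then show ?thesis by simp
  qed
qed

lemma ei_zero: "epoch_iters G n eta D m I k xt 0 ! 0 = xt" by simp

lemma ei_step:
  assumes "D (k * m + j) - k * m \<le> j"
  shows "epoch_iters G n eta D m I k xt (Suc j) ! Suc j =
    epoch_iters G n eta D m I k xt j ! j + eta *\<^sub>R (- (G (I (k * m + j))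
      (epoch_iters G n eta D m I k xt (D (k * m + j) - k * m) ! (D (k * m + j) - k * m))
      - G (I (k * m + j)) xt + avg_grad G n xt))"
proof -
  let ?xs = "epoch_iters G n eta D m I k xt j"
  have "?xs ! (D (k * m + j) - k * m) = epoch_iters G n eta D m I k xt (D (k * m + j) - k * m) ! (D (k * m + j) - k * m)"
    using assms by (rule ei_prefix)
  then show ?thesis by (simp add: Let_def nth_append ei_length)
qed

lemma ei_dep:
  "(\<And>s. s < j \<Longrightarrow> I (k * m + s) = I' (k * m + s)) \<Longrightarrow>
    epoch_iters G n eta D m I k xt j = epoch_iters G n eta D m I' k xt j"
  by (induction j) (simp_all add: Let_def)

lemma snap_dep_snd:
  "(\<And>j. j < k \<Longrightarrow> snd \<omega> j = snd \<omega>' j) \<Longrightarrow> fst \<omega> = fst \<omega>' \<Longrightarrow>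
    snapshot G n eta D m x0 \<omega> k = snapshot G n eta D m x0 \<omega>' k"
  by (induction k) simp_all

lemma snap_dep:
  "(\<And>j. j < k \<Longrightarrow> snd \<omega> j = snd \<omega>' j \<and> snd \<omega> j < m) \<Longrightarrow>
   (\<And>t. t < k * m \<Longrightarrow> fst \<omega> t = fst \<omega>' t) \<Longrightarrow>
    snapshot G n eta D m x0 \<omega> k = snapshot G n eta D m x0 \<omega>' k"
proof (induction k)
  case 0 then show ?case by simp
next
  case (Suc k)
  have IH: "snapshot G n eta D m x0 \<omega> k = snapshot G n eta D m x0 \<omega>' k"
  proof (rule Suc.IH)
    fix j assume "j < k" then show "snd \<omega> j = snd \<omega>' j \<and> snd \<omega> j < m" using Suc.prems(1)[of j] by simp
  next
    fix t assume "t < k * m" then show "fst \<omega> t = fst \<omega>' t" using Suc.prems(2)[of t] by simp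
  qed
  have s: "snd \<omega> k = snd \<omega>' k" "snd \<omega> k < m" using Suc.prems(1)[of k] by auto
  have "epoch_iters G n eta D m (fst \<omega>) k (snapshot G n eta D m x0 \<omega> k) (snd \<omega> k)
      = epoch_iters G n eta D m (fst \<omega>') k (snapshot G n eta D m x0 \<omega> k) (snd \<omega> k)"
  proof (rule ei_dep)
    fix s assume "s < snd \<omega> k"
    then have "k * m + s < Suc k * m" using s by simp
    then show "fst \<omega> (k * m + s) = fst \<omega>' (k * m + s)" using Suc.prems(2) by blast
  qed
  then show ?case using IH s by simp
qed




lemma sum_PiE_coord:
  fixes H :: "('i \<Rightarrow> 'b) \<Rightarrow> 'b \<Rightarrow> real"
  assumes fin: "finite S" "\<And>i. i \<in> S \<Longrightarrow> finite (B i)" and t: "t \<in> S" and ne: "B t \<noteq> {}"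
    and inv: "\<And>a z v. a \<in> PiE S B \<Longrightarrow> z \<in> B t \<Longrightarrow> H (a(t := z)) v = H a v"
  shows "(\<Sum>a\<in>PiE S B. H a (a t)) = (1 / real (card (B t))) * (\<Sum>v\<in>B t. \<Sum>a\<in>PiE S B. H a v)"
proof -
  let ?A = "PiE S B"
  have finA: "finite ?A" using fin by (intro finite_PiE) auto
  have finB: "finite (B t)" using fin t by auto
  have eq: "(\<Sum>a\<in>{a\<in>?A. a t = w}. H a u) = (\<Sum>a\<in>{a\<in>?A. a t = v}. H a u)"
    if v: "v \<in> B t" and w: "w \<in> B t" for v w u
  proof -
    have bij: "bij_betw (\<lambda>a. a(t := v)) {a\<in>?A. a t = w} {a\<in>?A. a t = v}"
    proof (rule bij_betwI[where g = "\<lambda>a. a(t := w)"])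
      show "(\<lambda>a. a(t := v)) \<in> {a \<in> ?A. a t = w} \<rightarrow> {a \<in> ?A. a t = v}"
        using v t by (auto simp: PiE_iff extensional_def)
      show "(\<lambda>a. a(t := w)) \<in> {a \<in> ?A. a t = v} \<rightarrow> {a \<in> ?A. a t = w}"
        using w t by (auto simp: PiE_iff extensional_def)
    qed auto
    have "(\<Sum>a\<in>{a\<in>?A. a t = v}. H a u) = (\<Sum>a\<in>{a\<in>?A. a t = w}. H (a(t := v)) u)"
      using sum.reindex_bij_betw[OF bij, of "\<lambda>a. H a u"] by simp
    also have "\<dots> = (\<Sum>a\<in>{a\<in>?A. a t = w}. H a u)"
      using inv v by (intro sum.cong) auto
    finally show ?thesis by simp
  qed
  have grp: "(\<Sum>a\<in>?A. h a) = (\<Sum>w\<in>B t. \<Sum>a\<in>{a\<in>?A. a t = w}. h a)" for h :: "('i \<Rightarrow> 'b) \<Rightarrow> real"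
  proof -
    have "(\<lambda>a. a t) ` ?A \<subseteq> B t" using t by auto
    from sum.group[OF finA finB this, of h] show ?thesis by simp
  qed
  have one: "(\<Sum>a\<in>{a\<in>?A. a t = v}. H a u) = (1 / real (card (B t))) * (\<Sum>a\<in>?A. H a u)"
    if v: "v \<in> B t" for v u
  proof -
    have "(\<Sum>a\<in>?A. H a u) = (\<Sum>w\<in>B t. \<Sum>a\<in>{a\<in>?A. a t = v}. H a u)"
      using grp[of "\<lambda>a. H a u"] eq[OF v] by simp
    also have "\<dots> = real (card (B t)) * (\<Sum>a\<in>{a\<in>?A. a t = v}. H a u)" by simp
    finally show ?thesis using ne finB by (simp add: field_simps card_gt_0_iff)
  qed
  have "(\<Sum>a\<in>?A. H a (a t)) = (\<Sum>v\<in>B t. \<Sum>a\<in>{a\<in>?A. a t = v}. H a (a t))" by (rule grp)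
  also have "\<dots> = (\<Sum>v\<in>B t. \<Sum>a\<in>{a\<in>?A. a t = v}. H a v)"
    by (intro sum.cong) auto
  also have "\<dots> = (\<Sum>v\<in>B t. (1 / real (card (B t))) * (\<Sum>a\<in>?A. H a v))"
    by (intro sum.cong one) auto
  finally show ?thesis by (simp add: sum_distrib_left)
qed




lemma sum_times:
  assumes "finite A" "finite B"
  shows "(\<Sum>\<omega>\<in>A \<times> B. h \<omega>) = (\<Sum>b\<in>B. \<Sum>a\<in>A. h (a, b))"
proof -
  have "(\<Sum>\<omega>\<in>A \<times> B. h \<omega>) = (\<Sum>a\<in>A. \<Sum>b\<in>B. h (a, b))"
    using sum.cartesian_product[of "\<lambda>a b. h (a, b)" B A] by (simp add: case_prod_beta)
  also have "\<dots> = (\<Sum>b\<in>B. \<Sum>a\<in>A. h (a, b))" by (rule sum.swap)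
  finally show ?thesis .
qed

locale sett2 = sett f G e n L lam \<Delta> xstar
  for f :: "nat \<Rightarrow> real ^ 'd \<Rightarrow> real" and G e n L lam \<Delta> xstar +
  fixes m \<tau> :: nat and \<eta> :: real and D :: "nat \<Rightarrow> nat" and x0 :: "real ^ 'd"
  assumes m_pos: "m \<ge> 1"
    and delay: "\<And>t. (t div m) * m \<le> D t \<and> D t \<le> t \<and> t - D t \<le> \<tau>"
    and eta_pos: "\<eta> > 0"
    and lam_pos: "lam > 0"
begin

definition Om :: "nat \<Rightarrow> ((nat \<Rightarrow> nat) \<times> (nat \<Rightarrow> nat)) set" where
  "Om k = PiE {..<Suc k * m} (\<lambda>_. {..<n}) \<times> PiE {..<Suc k} (\<lambda>_. {..<m})"

definition Xs where "Xs k \<omega> = snapshot G n \<eta> D m x0 \<omega> k"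
definition Ys where "Ys k \<omega> j = epoch_iters G n \<eta> D m (fst \<omega>) k (Xs k \<omega>) j ! j"
definition dd where "dd k j = D (k * m + j) - k * m"
definition gg where "gg k \<omega> j = G (fst \<omega> (k * m + j)) (Ys k \<omega> (dd k j))
   - G (fst \<omega> (k * m + j)) (Xs k \<omega>) + ga (Xs k \<omega>)"

lemma finite_Om: "finite (Om k)"
  unfolding Om_def by (intro finite_cartesian_product finite_PiE) auto

lemma dd_le: "dd k j \<le> j"
  using delay[of "k * m + j"] unfolding dd_def by arith

lemma dd_win:
  assumes "j < m" shows "j \<le> dd k j + \<tau>"
proof -
  have "(k * m + j) div m = k" using assms by simp
  then have "k * m \<le> D (k * m + j)" using delay[of "k * m + j"] by simp
  then show ?thesis using delay[of "k * m + j"] unfolding dd_def by arith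
qed

lemma Y_step: "Ys k \<omega> (Suc j) = Ys k \<omega> j - \<eta> *\<^sub>R gg k \<omega> j"
proof -
  have le: "D (k * m + j) - k * m \<le> j" using dd_le by (simp add: dd_def)
  have "Ys k \<omega> (Suc j) = Ys k \<omega> j + \<eta> *\<^sub>R (- gg k \<omega> j)"
    unfolding Ys_def gg_def dd_def
    by (rule ei_step[where D=D and k=k and m=m and j=j and G=G and n=n and eta=\<eta> and I="fst \<omega>" and xt="Xs k \<omega>", OF le])
  then show ?thesis by simp
qed

lemma Y_zero: "Ys k \<omega> 0 = Xs k \<omega>" by (simp add: Ys_def)

lemma Y_diff: "Ys k \<omega> (d + l) - Ys k \<omega> d = - \<eta> *\<^sub>R (\<Sum>s\<in>{d..<d + l}. gg k \<omega> s)"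
proof (induction l)
  case 0 then show ?case by simp
next
  case (Suc l)
  have "Ys k \<omega> (d + Suc l) - Ys k \<omega> d = (Ys k \<omega> (d + l) - Ys k \<omega> d) - \<eta> *\<^sub>R gg k \<omega> (d + l)"
    by (simp add: Y_step)
  also have "\<dots> = - \<eta> *\<^sub>R (\<Sum>s\<in>{d..<d + Suc l}. gg k \<omega> s)"
    by (simp add: Suc.IH scaleR_add_right)
  finally show ?case .
qed

lemma Om_snd: "\<omega> \<in> Om k \<Longrightarrow> j < Suc k \<Longrightarrow> snd \<omega> j < m"
  by (auto simp: Om_def PiE_iff)

lemma inv_X:
  assumes "\<omega> \<in> Om k" "k * m \<le> t"
  shows "Xs k ((fst \<omega>)(t := z), snd \<omega>) = Xs k \<omega>"
  unfolding Xs_def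
proof (rule snap_dep)
  fix j assume "j < k"
  then show "snd ((fst \<omega>)(t := z), snd \<omega>) j = snd \<omega> j \<and> snd ((fst \<omega>)(t := z), snd \<omega>) j < m"
    using Om_snd[OF assms(1), of j] by simp
next
  fix t' assume "t' < k * m"
  then show "fst ((fst \<omega>)(t := z), snd \<omega>) t' = fst \<omega> t'" using assms by simp
qed

lemma inv_Y:
  assumes "\<omega> \<in> Om k" "k * m + j \<le> t"
  shows "Ys k ((fst \<omega>)(t := z), snd \<omega>) j = Ys k \<omega> j"
proof -
  have x: "Xs k ((fst \<omega>)(t := z), snd \<omega>) = Xs k \<omega>" using assms by (intro inv_X) auto
  have "epoch_iters G n \<eta> D m ((fst \<omega>)(t := z)) k (Xs k \<omega>) j = epoch_iters G n \<eta> D m (fst \<omega>) k (Xs k \<omega>) j"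
    by (rule ei_dep) (use assms in auto)
  then show ?thesis by (simp add: Ys_def x)
qed

lemma inv_X_snd: "Xs k (fst \<omega>, (snd \<omega>)(k := z)) = Xs k \<omega>"
  unfolding Xs_def by (rule snap_dep_snd) auto

lemma inv_Y_snd: "Ys k (fst \<omega>, (snd \<omega>)(k := z)) j = Ys k \<omega> j"
  by (simp add: Ys_def inv_X_snd)

lemma indep_fst:
  assumes t: "t < Suc k * m"
    and inv: "\<And>\<omega> z v. \<omega> \<in> Om k \<Longrightarrow> z < n \<Longrightarrow> H ((fst \<omega>)(t := z), snd \<omega>) v = H \<omega> v"
  shows "(\<Sum>\<omega>\<in>Om k. H \<omega> (fst \<omega> t)) = (1 / real n) * (\<Sum>v<n. \<Sum>\<omega>\<in>Om k. H \<omega> v)"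
proof -
  let ?A = "PiE {..<Suc k * m} (\<lambda>_. {..<n})" and ?B = "PiE {..<Suc k} (\<lambda>_. {..<m})"
  have fA: "finite ?A" "finite ?B" by (auto intro!: finite_PiE)
  have "(\<Sum>\<omega>\<in>Om k. H \<omega> (fst \<omega> t)) = (\<Sum>b\<in>?B. \<Sum>a\<in>?A. H (a, b) (a t))"
    unfolding Om_def by (subst sum_times[OF fA]) simp
  also have "\<dots> = (\<Sum>b\<in>?B. (1 / real n) * (\<Sum>v<n. \<Sum>a\<in>?A. H (a, b) v))"
  proof (rule sum.cong[OF refl])
    fix b assume b: "b \<in> ?B"
    have "(\<Sum>a\<in>?A. H (a, b) (a t)) = (1 / real (card {..<n})) * (\<Sum>v\<in>{..<n}. \<Sum>a\<in>?A. H (a, b) v)"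
    proof (rule sum_PiE_coord[where H = "\<lambda>a v. H (a, b) v"])
      fix a z v assume "a \<in> ?A" "z \<in> {..<n}"
      then show "H (a(t := z), b) v = H (a, b) v"
        using inv[of "(a, b)" z v] b by (simp add: Om_def)
    qed (use t n_pos in \<open>auto simp: lessThan_empty_iff\<close>)
    then show "(\<Sum>a\<in>?A. H (a, b) (a t)) = (1 / real n) * (\<Sum>v<n. \<Sum>a\<in>?A. H (a, b) v)" by simp
  qed
  also have "\<dots> = (1 / real n) * (\<Sum>v<n. \<Sum>b\<in>?B. \<Sum>a\<in>?A. H (a, b) v)"
  proof -
    have "(\<Sum>b\<in>?B. \<Sum>v<n. \<Sum>a\<in>?A. H (a, b) v) = (\<Sum>v<n. \<Sum>b\<in>?B. \<Sum>a\<in>?A. H (a, b) v)"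
      by (rule sum.swap)
    then show ?thesis by (simp add: sum_divide_distrib[symmetric])
  qed
  also have "\<dots> = (1 / real n) * (\<Sum>v<n. \<Sum>\<omega>\<in>Om k. H \<omega> v)"
    unfolding Om_def by (intro arg_cong[where f="\<lambda>x. _ * x"] sum.cong refl sum_times[OF fA, symmetric])
  finally show ?thesis .
qed

lemma indep_snd:
  assumes inv: "\<And>\<omega> z v. \<omega> \<in> Om k \<Longrightarrow> z < m \<Longrightarrow> H (fst \<omega>, (snd \<omega>)(k := z)) v = H \<omega> v"
  shows "(\<Sum>\<omega>\<in>Om k. H \<omega> (snd \<omega> k)) = (1 / real m) * (\<Sum>v<m. \<Sum>\<omega>\<in>Om k. H \<omega> v)"
proof -
  let ?A = "PiE {..<Suc k * m} (\<lambda>_. {..<n})" and ?B = "PiE {..<Suc k} (\<lambda>_. {..<m})"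
  have fA: "finite ?A" "finite ?B" by (auto intro!: finite_PiE)
  have "(\<Sum>\<omega>\<in>Om k. H \<omega> (snd \<omega> k)) = (\<Sum>a\<in>?A. \<Sum>b\<in>?B. H (a, b) (b k))"
    unfolding Om_def by (subst sum_times[OF fA], subst sum.swap, simp)
  also have "\<dots> = (\<Sum>a\<in>?A. (1 / real m) * (\<Sum>v<m. \<Sum>b\<in>?B. H (a, b) v))"
  proof (rule sum.cong[OF refl])
    fix a assume a: "a \<in> ?A"
    have "(\<Sum>b\<in>?B. H (a, b) (b k)) = (1 / real (card {..<m})) * (\<Sum>v\<in>{..<m}. \<Sum>b\<in>?B. H (a, b) v)"
    proof (rule sum_PiE_coord[where H = "\<lambda>b v. H (a, b) v"])
      fix b z v assume "b \<in> ?B" "z \<in> {..<m}"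
      then show "H (a, b(k := z)) v = H (a, b) v"
        using inv[of "(a, b)" z v] a by (simp add: Om_def)
    qed (use m_pos in \<open>auto simp: lessThan_empty_iff\<close>)
    then show "(\<Sum>b\<in>?B. H (a, b) (b k)) = (1 / real m) * (\<Sum>v<m. \<Sum>b\<in>?B. H (a, b) v)" by simp
  qed
  also have "\<dots> = (1 / real m) * (\<Sum>v<m. \<Sum>a\<in>?A. \<Sum>b\<in>?B. H (a, b) v)"
  proof -
    have "(\<Sum>a\<in>?A. \<Sum>v<m. \<Sum>b\<in>?B. H (a, b) v) = (\<Sum>v<m. \<Sum>a\<in>?A. \<Sum>b\<in>?B. H (a, b) v)"
      by (rule sum.swap)
    then show ?thesis by (simp add: sum_divide_distrib[symmetric])
  qed
  also have "\<dots> = (1 / real m) * (\<Sum>v<m. \<Sum>\<omega>\<in>Om k. H \<omega> v)"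
    unfolding Om_def by (intro arg_cong[where f="\<lambda>x. _ * x"] sum.cong refl trans[OF sum.swap sum_times[OF fA, symmetric]])
  finally show ?thesis .
qed

end



context sett2 begin

lemma avg_g: "(1 / real n) *\<^sub>R (\<Sum>v<n. G v a - G v X + ga X) = ga a"
proof -
  have "(\<Sum>v<n. G v a - G v X + ga X) = (\<Sum>v<n. G v a) - (\<Sum>v<n. G v X) + real n *\<^sub>R ga X"
    by (simp only: sum.distrib sum_subtractf sum_constant_scaleR card_lessThan)
  then have "(1 / real n) *\<^sub>R (\<Sum>v<n. G v a - G v X + ga X) = ga a - ga X + ga X"
    using n_pos by (simp add: avg_grad_def scaleR_add_right scaleR_diff_right)
  then show ?thesis by simp
qed

lemma pt_expand:
  "(norm (y - \<eta> *\<^sub>R g - xstar))\<^sup>2 = (norm (y - xstar))\<^sup>2 - 2 * \<eta> * ((y - xstar) \<bullet> g) + \<eta>\<^sup>2 * (norm g)\<^sup>2"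
proof -
  define u where "u = y - xstar"
  have "y - \<eta> *\<^sub>R g - xstar = u - \<eta> *\<^sub>R g" by (simp add: u_def)
  then have "(norm (y - \<eta> *\<^sub>R g - xstar))\<^sup>2 = (u - \<eta> *\<^sub>R g) \<bullet> (u - \<eta> *\<^sub>R g)"
    by (simp only: power2_norm_eq_inner)
  also have "\<dots> = u \<bullet> u - 2 * \<eta> * (u \<bullet> g) + \<eta>\<^sup>2 * (g \<bullet> g)"
    by (simp only: inner_diff_left inner_diff_right inner_scaleR_left inner_scaleR_right)
       (simp add: inner_commute power2_eq_square algebra_simps)
  finally show ?thesis by (simp only: u_def power2_norm_eq_inner)
qed

lemma omega_main:
  assumes stab: "2 * L\<^sup>2 * \<Delta> * \<eta>\<^sup>2 * (real \<tau>)\<^sup>2 < 1"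
    and den: "1 - 4 * L * ((\<eta> + L * \<Delta> * (real \<tau>)\<^sup>2 * \<eta>\<^sup>2) / (1 - 2 * L\<^sup>2 * \<Delta> * \<eta>\<^sup>2 * (real \<tau>)\<^sup>2)) > 0"
  shows "(\<Sum>\<omega>\<in>Om k. fa (snapshot G n \<eta> D m x0 \<omega> (Suc k)) - fa xstar)
     \<le> ((1 / (lam * \<eta> * real m)
                 + 4 * L * ((\<eta> + L * \<Delta> * (real \<tau>)\<^sup>2 * \<eta>\<^sup>2) / (1 - 2 * L\<^sup>2 * \<Delta> * \<eta>\<^sup>2 * (real \<tau>)\<^sup>2)))
               / (1 - 4 * L * ((\<eta> + L * \<Delta> * (real \<tau>)\<^sup>2 * \<eta>\<^sup>2) / (1 - 2 * L\<^sup>2 * \<Delta> * \<eta>\<^sup>2 * (real \<tau>)\<^sup>2))))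
       * (\<Sum>\<omega>\<in>Om k. fa (Xs k \<omega>) - fa xstar)"
proof -
  define a where "a j = (\<Sum>\<omega>\<in>Om k. (norm (Ys k \<omega> j - xstar))\<^sup>2)" for j
  define F where "F j = (\<Sum>\<omega>\<in>Om k. fa (Ys k \<omega> j) - fa xstar)" for j
  define Ft where "Ft = (\<Sum>\<omega>\<in>Om k. fa (Xs k \<omega>) - fa xstar)"
  define r where "r j = (\<Sum>\<omega>\<in>Om k. (norm (Ys k \<omega> j - Ys k \<omega> (dd k j)))\<^sup>2)" for j
  define Gb where "Gb j = (\<Sum>\<omega>\<in>Om k. (norm (gg k \<omega> j))\<^sup>2)" for j
  have tlt: "k * m + j < Suc k * m" if "j < m" for j using that by simp
  have inner: "(\<Sum>\<omega>\<in>Om k. (Ys k \<omega> j - xstar) \<bullet> gg k \<omega> j) \<ge> F j - L * \<Delta> / 2 * r j"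
    if j: "j < m" for j
  proof -
    define H where "H \<omega> i = (Ys k \<omega> j - xstar) \<bullet> (G i (Ys k \<omega> (dd k j)) - G i (Xs k \<omega>) + ga (Xs k \<omega>))" for \<omega> i
    have "(\<Sum>\<omega>\<in>Om k. (Ys k \<omega> j - xstar) \<bullet> gg k \<omega> j) = (\<Sum>\<omega>\<in>Om k. H \<omega> (fst \<omega> (k * m + j)))"
      by (simp add: H_def gg_def)
    also have "\<dots> = (1 / real n) * (\<Sum>v<n. \<Sum>\<omega>\<in>Om k. H \<omega> v)"
    proof (rule indep_fst[OF tlt[OF j]])
      fix \<omega> z v assume \<omega>: "\<omega> \<in> Om k"
      have "Ys k ((fst \<omega>)(k * m + j := z), snd \<omega>) j = Ys k \<omega> j"
        by (rule inv_Y[OF \<omega>]) simp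
      moreover have "Ys k ((fst \<omega>)(k * m + j := z), snd \<omega>) (dd k j) = Ys k \<omega> (dd k j)"
        by (rule inv_Y[OF \<omega>]) (use dd_le in simp)
      moreover have "Xs k ((fst \<omega>)(k * m + j := z), snd \<omega>) = Xs k \<omega>"
        by (rule inv_X[OF \<omega>]) simp
      ultimately show "H ((fst \<omega>)(k * m + j := z), snd \<omega>) v = H \<omega> v" by (simp add: H_def)
    qed
    also have "\<dots> = (\<Sum>\<omega>\<in>Om k. (1 / real n) * (\<Sum>v<n. H \<omega> v))"
      by (simp add: sum_distrib_left sum.swap[of _ "Om k"])
    also have "\<dots> = (\<Sum>\<omega>\<in>Om k. (Ys k \<omega> j - xstar) \<bullet> ga (Ys k \<omega> (dd k j)))"
    proof (rule sum.cong[OF refl])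
      fix \<omega>
      have "(1 / real n) * (\<Sum>v<n. H \<omega> v) = (Ys k \<omega> j - xstar) \<bullet> ((1 / real n) *\<^sub>R
          (\<Sum>v<n. G v (Ys k \<omega> (dd k j)) - G v (Xs k \<omega>) + ga (Xs k \<omega>)))"
        by (simp add: H_def inner_sum_right)
      then show "(1 / real n) * (\<Sum>v<n. H \<omega> v) = (Ys k \<omega> j - xstar) \<bullet> ga (Ys k \<omega> (dd k j))"
        by (simp only: avg_g)
    qed
    also have "\<dots> \<ge> (\<Sum>\<omega>\<in>Om k. fa (Ys k \<omega> j) - fa xstar - L * \<Delta> / 2 * (norm (Ys k \<omega> j - Ys k \<omega> (dd k j)))\<^sup>2)"
      by (intro sum_mono inner_bound)
    finally show ?thesis
      by (simp add: F_def r_def sum_subtractf sum_distrib_left)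
  qed
  have step: "a (Suc j) \<le> a j - 2 * \<eta> * F j + \<eta> * L * \<Delta> * r j + \<eta>\<^sup>2 * Gb j" if j: "j < m" for j
  proof -
    have "a (Suc j) = (\<Sum>\<omega>\<in>Om k. (norm (Ys k \<omega> j - xstar))\<^sup>2 - 2 * \<eta> * ((Ys k \<omega> j - xstar) \<bullet> gg k \<omega> j)
        + \<eta>\<^sup>2 * (norm (gg k \<omega> j))\<^sup>2)"
      unfolding a_def by (intro sum.cong refl) (simp add: Y_step pt_expand)
    also have "\<dots> = a j - 2 * \<eta> * (\<Sum>\<omega>\<in>Om k. (Ys k \<omega> j - xstar) \<bullet> gg k \<omega> j) + \<eta>\<^sup>2 * Gb j"
      by (simp add: a_def Gb_def sum.distrib sum_subtractf sum_distrib_left)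
    also have "\<dots> \<le> a j - 2 * \<eta> * (F j - L * \<Delta> / 2 * r j) + \<eta>\<^sup>2 * Gb j"
      using inner[OF j] eta_pos by (simp add: mult_left_mono)
    finally show ?thesis by (simp add: algebra_simps)
  qed
  have gb: "Gb j \<le> 2 * L\<^sup>2 * \<Delta> * r j + 8 * L * F j + 8 * L * Ft" if j: "j < m" for j
  proof -
    define H where "H \<omega> i = (norm (G i (Ys k \<omega> (dd k j)) - G i (Xs k \<omega>) + ga (Xs k \<omega>)))\<^sup>2" for \<omega> i
    have "Gb j = (\<Sum>\<omega>\<in>Om k. H \<omega> (fst \<omega> (k * m + j)))"
      by (simp add: H_def gg_def Gb_def)
    also have "\<dots> = (1 / real n) * (\<Sum>v<n. \<Sum>\<omega>\<in>Om k. H \<omega> v)"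
    proof (rule indep_fst[OF tlt[OF j]])
      fix \<omega> z v assume \<omega>: "\<omega> \<in> Om k"
      have "Ys k ((fst \<omega>)(k * m + j := z), snd \<omega>) (dd k j) = Ys k \<omega> (dd k j)"
        by (rule inv_Y[OF \<omega>]) (use dd_le in simp)
      moreover have "Xs k ((fst \<omega>)(k * m + j := z), snd \<omega>) = Xs k \<omega>"
        by (rule inv_X[OF \<omega>]) simp
      ultimately show "H ((fst \<omega>)(k * m + j := z), snd \<omega>) v = H \<omega> v" by (simp add: H_def)
    qed
    also have "\<dots> = (\<Sum>\<omega>\<in>Om k. (1 / real n) * (\<Sum>v<n. H \<omega> v))"
      by (simp add: sum_distrib_left sum.swap[of _ "Om k"])
    also have "\<dots> \<le> (\<Sum>\<omega>\<in>Om k. 2 * L\<^sup>2 * \<Delta> * (norm (Ys k \<omega> j - Ys k \<omega> (dd k j)))\<^sup>2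
        + 8 * L * (fa (Ys k \<omega> j) - fa xstar) + 8 * L * (fa (Xs k \<omega>) - fa xstar))"
    proof (intro sum_mono)
      fix \<omega> assume "\<omega> \<in> Om k"
      show "(1 / real n) * (\<Sum>v<n. H \<omega> v) \<le> 2 * L\<^sup>2 * \<Delta> * (norm (Ys k \<omega> j - Ys k \<omega> (dd k j)))\<^sup>2
        + 8 * L * (fa (Ys k \<omega> j) - fa xstar) + 8 * L * (fa (Xs k \<omega>) - fa xstar)"
        using g_bound[of "Ys k \<omega> (dd k j)" "Xs k \<omega>" "Ys k \<omega> j"]
        by (simp add: H_def norm_minus_commute)
    qed
    also have "\<dots> = 2 * L\<^sup>2 * \<Delta> * r j + 8 * L * F j + 8 * L * Ft"
      by (simp add: r_def F_def Ft_def sum.distrib sum_distrib_left)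
    finally show ?thesis .
  qed
  have rb: "r j \<le> real \<tau> * \<eta>\<^sup>2 * (\<Sum>s\<in>{dd k j..<j}. Gb s)" if j: "j < m" for j
  proof -
    have pt: "(norm (Ys k \<omega> j - Ys k \<omega> (dd k j)))\<^sup>2 \<le> real \<tau> * \<eta>\<^sup>2 * (\<Sum>s\<in>{dd k j..<j}. (norm (gg k \<omega> s))\<^sup>2)"
      for \<omega>
    proof -
      define d where "d = dd k j"
      have dj: "d \<le> j" "j \<le> d + \<tau>" using dd_le dd_win[OF j] by (auto simp: d_def)
      have "Ys k \<omega> j - Ys k \<omega> d = - \<eta> *\<^sub>R (\<Sum>s\<in>{d..<j}. gg k \<omega> s)"
        using Y_diff[of k \<omega> d "j - d"] dj by simp
      then have "(norm (Ys k \<omega> j - Ys k \<omega> d))\<^sup>2 = \<eta>\<^sup>2 * (norm (\<Sum>s\<in>{d..<j}. gg k \<omega> s))\<^sup>2"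
        using eta_pos by (simp add: power_mult_distrib)
      also have "\<dots> \<le> \<eta>\<^sup>2 * (\<Sum>s\<in>{d..<j}. norm (gg k \<omega> s))\<^sup>2"
        by (intro mult_left_mono power_mono norm_sum) auto
      also have "\<dots> \<le> \<eta>\<^sup>2 * ((\<Sum>s\<in>{d..<j}. (norm (gg k \<omega> s))\<^sup>2) * real (card {d..<j}))"
        by (intro mult_left_mono sum_squared_le_sum_of_squares) auto
      also have "\<dots> \<le> \<eta>\<^sup>2 * ((\<Sum>s\<in>{d..<j}. (norm (gg k \<omega> s))\<^sup>2) * real \<tau>)"
        using dj by (intro mult_left_mono sum_nonneg) auto
      finally show ?thesis by (simp add: d_def mult_ac)
    qed
    have "r j \<le> (\<Sum>\<omega>\<in>Om k. real \<tau> * \<eta>\<^sup>2 * (\<Sum>s\<in>{dd k j..<j}. (norm (gg k \<omega> s))\<^sup>2))"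
      unfolding r_def by (intro sum_mono pt)
    also have "\<dots> = real \<tau> * \<eta>\<^sup>2 * (\<Sum>s\<in>{dd k j..<j}. Gb s)"
      by (simp add: Gb_def sum_distrib_left[symmetric] sum.swap[of _ "Om k"])
    finally show ?thesis .
  qed
  have a0: "a 0 \<le> 2 / lam * Ft"
  proof -
    have "a 0 \<le> (\<Sum>\<omega>\<in>Om k. 2 / lam * (fa (Xs k \<omega>) - fa xstar))"
      unfolding a_def
    proof (intro sum_mono)
      fix \<omega>
      have "lam / 2 * (norm (Xs k \<omega> - xstar))\<^sup>2 \<le> fa (Xs k \<omega>) - fa xstar" by (rule strong_bound)
      then show "(norm (Ys k \<omega> 0 - xstar))\<^sup>2 \<le> 2 / lam * (fa (Xs k \<omega>) - fa xstar)"
        using lam_pos by (simp add: Y_zero field_simps)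
    qed
    then show ?thesis by (simp add: Ft_def sum_distrib_left)
  qed
  have am: "a m \<ge> 0" unfolding a_def by (intro sum_nonneg) auto
  have Gb0: "Gb j \<ge> 0" for j unfolding Gb_def by (intro sum_nonneg) auto
  have main: "(\<Sum>j<m. F j) \<le> real m * ((1 / (lam * \<eta> * real m)
                 + 4 * L * ((\<eta> + L * \<Delta> * (real \<tau>)\<^sup>2 * \<eta>\<^sup>2) / (1 - 2 * L\<^sup>2 * \<Delta> * \<eta>\<^sup>2 * (real \<tau>)\<^sup>2)))
               / (1 - 4 * L * ((\<eta> + L * \<Delta> * (real \<tau>)\<^sup>2 * \<eta>\<^sup>2) / (1 - 2 * L\<^sup>2 * \<Delta> * \<eta>\<^sup>2 * (real \<tau>)\<^sup>2)))) * Ft"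
    by (rule seq_bound[where a=a and r=r and Gb=Gb and d="dd k", OF m_pos eta_pos lam_pos L_nonneg Delta_nonneg
          step rb _ gb Gb0 a0 am stab den]) (use dd_le dd_win in auto)
  have "(\<Sum>\<omega>\<in>Om k. fa (snapshot G n \<eta> D m x0 \<omega> (Suc k)) - fa xstar)
      = (\<Sum>\<omega>\<in>Om k. fa (Ys k \<omega> (snd \<omega> k)) - fa xstar)"
    by (simp add: Ys_def Xs_def)
  also have "\<dots> = (1 / real m) * (\<Sum>v<m. \<Sum>\<omega>\<in>Om k. fa (Ys k \<omega> v) - fa xstar)"
    by (rule indep_snd[where H = "\<lambda>\<omega> v. fa (Ys k \<omega> v) - fa xstar"]) (simp add: inv_Y_snd)
  also have "\<dots> = (1 / real m) * (\<Sum>j<m. F j)" by (simp add: F_def)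
  also have "\<dots> \<le> (1 / real m) * (real m * ((1 / (lam * \<eta> * real m)
                 + 4 * L * ((\<eta> + L * \<Delta> * (real \<tau>)\<^sup>2 * \<eta>\<^sup>2) / (1 - 2 * L\<^sup>2 * \<Delta> * \<eta>\<^sup>2 * (real \<tau>)\<^sup>2)))
               / (1 - 4 * L * ((\<eta> + L * \<Delta> * (real \<tau>)\<^sup>2 * \<eta>\<^sup>2) / (1 - 2 * L\<^sup>2 * \<Delta> * \<eta>\<^sup>2 * (real \<tau>)\<^sup>2)))) * Ft)"
    by (intro mult_left_mono main) auto
  finally show ?thesis using m_pos by (simp add: Ft_def)
qed

end



abbreviation PM :: "nat \<Rightarrow> (nat \<Rightarrow> nat) measure" where
  "PM c \<equiv> PiM UNIV (\<lambda>_::nat. measure_pmf (pmf_of_set {..<c}))"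

lemma prob_PM: "c \<ge> 1 \<Longrightarrow> prob_space (PM c)"
  by (intro prob_space_PiM prob_space_measure_pmf)

lemma space_PM: "space (PM c) = UNIV"
  by (auto simp: space_PiM)

lemma cyl_eq: "prod_emb UNIV (\<lambda>_::nat. measure_pmf (pmf_of_set {..<c})) J (PiE J A) = {f. \<forall>t\<in>J. f t \<in> A t}"
  by (auto simp: prod_emb_def space_PiM PiE_iff)

lemma cyl_sets: "finite J \<Longrightarrow> {f::nat \<Rightarrow> nat. \<forall>t\<in>J. f t \<in> A t} \<in> sets (PM c)"
  using sets_PiM_I[of J UNIV A "\<lambda>_::nat. measure_pmf (pmf_of_set {..<c})"] by (simp add: cyl_eq)

lemma cyl_emeasure:
  assumes "finite J" "c \<ge> 1"
  shows "emeasure (PM c) {f. \<forall>t\<in>J. f t \<in> A t} = (\<Prod>t\<in>J. ennreal (real (card ({..<c} \<inter> A t)) / real c))"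
proof -
  have "emeasure (PM c) {f. \<forall>t\<in>J. f t \<in> A t} = (\<Prod>t\<in>J. emeasure (measure_pmf (pmf_of_set {..<c})) (A t))"
    using emeasure_PiM_emb[of UNIV "\<lambda>_::nat. measure_pmf (pmf_of_set {..<c})" J A] assms
    by (simp add: cyl_eq prob_space_measure_pmf)
  also have "\<dots> = (\<Prod>t\<in>J. ennreal (real (card ({..<c} \<inter> A t)) / real c))"
    using assms by (intro prod.cong refl) (simp add: emeasure_pmf_of_set lessThan_empty_iff)
  finally show ?thesis .
qed

lemma lt_ge_empty: "{..<(c::nat)} \<inter> {c..} = {}" by auto

locale ms =
  fixes n m :: nat
  assumes n1: "n \<ge> 1" and m1: "m \<ge> 1"
begin

abbreviation M where "M \<equiv> svrg_space n m"

lemma M_eq: "M = PM n \<Otimes>\<^sub>M PM m" by (simp add: svrg_space_def)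

lemma prob1: "prob_space (PM n)" using n1 by (rule prob_PM)
lemma prob2: "prob_space (PM m)" using m1 by (rule prob_PM)

lemma prob_M: "prob_space M"
proof -
  interpret P1: prob_space "PM n" by (rule prob1)
  interpret P2: prob_space "PM m" by (rule prob2)
  interpret pair_prob_space "PM n" "PM m" ..
  show ?thesis unfolding M_eq by (rule prob_space_axioms)
qed

lemma space_M: "space M = UNIV"
  by (simp add: M_eq space_pair_measure space_PM)

lemma emeasure_times:
  assumes "A \<in> sets (PM n)" "B \<in> sets (PM m)"
  shows "emeasure M (A \<times> B) = emeasure (PM n) A * emeasure (PM m) B"
proof -
  interpret P2: prob_space "PM m" by (rule prob2)
  show ?thesis unfolding M_eq by (rule P2.emeasure_pair_measure_Times[OF assms])
qed

lemma times_sets: "A \<in> sets (PM n) \<Longrightarrow> B \<in> sets (PM m) \<Longrightarrow> A \<times> B \<in> sets M"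
  unfolding M_eq by (rule pair_measureI)

lemma U1: "UNIV \<in> sets (PM n)" using sets.top[of "PM n"] by (simp only: space_PM)
lemma U2: "UNIV \<in> sets (PM m)" using sets.top[of "PM m"] by (simp only: space_PM)

lemma AE_fst: "AE \<omega> in M. fst \<omega> t < n"
proof -
  let ?N = "{f::nat \<Rightarrow> nat. \<forall>s\<in>{t}. f s \<in> {n..}} \<times> (UNIV :: (nat \<Rightarrow> nat) set)"
  have c1: "{f::nat \<Rightarrow> nat. \<forall>s\<in>{t}. f s \<in> {n..}} \<in> sets (PM n)"
    by (rule cyl_sets[where J="{t}" and A="\<lambda>_. {n..}" and c=n], rule finite.intros, rule finite.intros)
  have s: "?N \<in> sets M" by (rule times_sets[OF c1 U2])
  have "emeasure M ?N = emeasure (PM n) {f::nat \<Rightarrow> nat. \<forall>s\<in>{t}. f s \<in> {n..}} * emeasure (PM m) UNIV"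
    by (rule emeasure_times[OF c1 U2])
  also have "emeasure (PM n) {f::nat \<Rightarrow> nat. \<forall>s\<in>{t}. f s \<in> {n..}} = 0"
    using cyl_emeasure[of "{t}" n "\<lambda>_. {n..}"] n1 by (simp add: lt_ge_empty)
  finally have z: "emeasure M ?N = 0"
    by simp
  have "{x \<in> space M. \<not> fst x t < n} = ?N"
    unfolding space_M by (simp add: set_eq_iff mem_Times_iff not_less)
  from AE_iff_measurable[OF s this] z show ?thesis by simp
qed

lemma AE_snd: "AE \<omega> in M. snd \<omega> t < m"
proof -
  let ?N = "(UNIV :: (nat \<Rightarrow> nat) set) \<times> {f::nat \<Rightarrow> nat. \<forall>s\<in>{t}. f s \<in> {m..}}"
  have c1: "{f::nat \<Rightarrow> nat. \<forall>s\<in>{t}. f s \<in> {m..}} \<in> sets (PM m)"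
    by (rule cyl_sets[where J="{t}" and A="\<lambda>_. {m..}" and c=m], rule finite.intros, rule finite.intros)
  have s: "?N \<in> sets M" by (rule times_sets[OF U1 c1])
  have "emeasure M ?N = emeasure (PM n) UNIV * emeasure (PM m) {f::nat \<Rightarrow> nat. \<forall>s\<in>{t}. f s \<in> {m..}}"
    by (rule emeasure_times[OF U1 c1])
  also have "emeasure (PM m) {f::nat \<Rightarrow> nat. \<forall>s\<in>{t}. f s \<in> {m..}} = 0"
    using cyl_emeasure[of "{t}" m "\<lambda>_. {m..}"] m1 by (simp add: lt_ge_empty)
  finally have z: "emeasure M ?N = 0"
    by simp
  have "{x \<in> space M. \<not> snd x t < m} = ?N"
    unfolding space_M by (simp add: set_eq_iff mem_Times_iff not_less)
  from AE_iff_measurable[OF s this] z show ?thesis by simp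
qed

lemma measure_cyl:
  fixes v :: "(nat \<Rightarrow> nat) \<times> (nat \<Rightarrow> nat)"
  assumes v: "\<forall>t<N. fst v t < n" "\<forall>j<K. snd v j < m"
  shows "measure M ({f. \<forall>t\<in>{..<N}. f t \<in> {fst v t}} \<times> {g. \<forall>j\<in>{..<K}. g j \<in> {snd v j}})
     = 1 / (real n ^ N * real m ^ K)"
proof -
  have c1: "{f::nat\<Rightarrow>nat. \<forall>t\<in>{..<N}. f t \<in> {fst v t}} \<in> sets (PM n)"
    by (rule cyl_sets) simp
  have c2: "{f::nat\<Rightarrow>nat. \<forall>t\<in>{..<K}. f t \<in> {snd v t}} \<in> sets (PM m)"
    by (rule cyl_sets) simp
  have e1: "emeasure (PM n) {f::nat\<Rightarrow>nat. \<forall>t\<in>{..<N}. f t \<in> {fst v t}} = ennreal ((1 / real n) ^ N)"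
  proof -
    have "emeasure (PM n) {f::nat\<Rightarrow>nat. \<forall>t\<in>{..<N}. f t \<in> {fst v t}}
        = (\<Prod>t\<in>{..<N}. ennreal (real (card ({..<n} \<inter> {fst v t})) / real n))"
      using n1 by (intro cyl_emeasure) auto
    also have "\<dots> = (\<Prod>t\<in>{..<N}. ennreal (1 / real n))"
    proof (intro prod.cong refl)
      fix t assume "t \<in> {..<N}"
      then have "{..<n} \<inter> {fst v t} = {fst v t}" using v by auto
      then show "ennreal (real (card ({..<n} \<inter> {fst v t})) / real n) = ennreal (1 / real n)" by simp
    qed
    also have "\<dots> = ennreal ((1 / real n) ^ N)" by (simp add: ennreal_power)
    finally show ?thesis .
  qed
  have e2: "emeasure (PM m) {f::nat\<Rightarrow>nat. \<forall>t\<in>{..<K}. f t \<in> {snd v t}} = ennreal ((1 / real m) ^ K)"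
  proof -
    have "emeasure (PM m) {f::nat\<Rightarrow>nat. \<forall>t\<in>{..<K}. f t \<in> {snd v t}}
        = (\<Prod>t\<in>{..<K}. ennreal (real (card ({..<m} \<inter> {snd v t})) / real m))"
      using m1 by (intro cyl_emeasure) auto
    also have "\<dots> = (\<Prod>t\<in>{..<K}. ennreal (1 / real m))"
    proof (intro prod.cong refl)
      fix t assume "t \<in> {..<K}"
      then have "{..<m} \<inter> {snd v t} = {snd v t}" using v by auto
      then show "ennreal (real (card ({..<m} \<inter> {snd v t})) / real m) = ennreal (1 / real m)" by simp
    qed
    also have "\<dots> = ennreal ((1 / real m) ^ K)" by (simp add: ennreal_power)
    finally show ?thesis .
  qed
  have "emeasure M ({f. \<forall>t\<in>{..<N}. f t \<in> {fst v t}} \<times> {g. \<forall>j\<in>{..<K}. g j \<in> {snd v j}})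
      = ennreal ((1 / real n) ^ N) * ennreal ((1 / real m) ^ K)"
    by (simp only: emeasure_times[OF c1 c2] e1 e2)
  also have "\<dots> = ennreal ((1 / real n) ^ N * (1 / real m) ^ K)"
    by (simp add: ennreal_mult'')
  finally show ?thesis
    unfolding measure_def by (simp add: power_one_over)
qed

lemma integral_finite:
  fixes h :: "(nat \<Rightarrow> nat) \<times> (nat \<Rightarrow> nat) \<Rightarrow> real" and N K :: nat
  assumes hm: "h \<in> borel_measurable M"
    and dep: "\<And>\<omega>. (\<forall>t<N. fst \<omega> t < n) \<Longrightarrow> (\<forall>j<K. snd \<omega> j < m) \<Longrightarrow>
         h \<omega> = h (restrict (fst \<omega>) {..<N}, restrict (snd \<omega>) {..<K})"
  shows "integral\<^sup>L M h = (\<Sum>v\<in>PiE {..<N} (\<lambda>_. {..<n}) \<times> PiE {..<K} (\<lambda>_. {..<m}). h v)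
            / real (card (PiE {..<N} (\<lambda>_. {..<n}) \<times> PiE {..<K} (\<lambda>_. {..<m})))"
proof -
  interpret P: prob_space M by (rule prob_M)
  define Om where "Om = PiE {..<N} (\<lambda>_. {..<n}) \<times> PiE {..<K} (\<lambda>_. {..<m})"
  define C where "C v = {f. \<forall>t\<in>{..<N}. f t \<in> {fst v t}} \<times> {g. \<forall>j\<in>{..<K}. g j \<in> {snd v j}}"
    for v :: "(nat \<Rightarrow> nat) \<times> (nat \<Rightarrow> nat)"
  have finOm: "finite Om" unfolding Om_def by (intro finite_cartesian_product finite_PiE) auto
  have cardOm: "real (card Om) = real n ^ N * real m ^ K"
    unfolding Om_def by (simp add: card_cartesian_product card_PiE)
  have Cs: "C v \<in> sets M" for v
    unfolding C_def by (intro times_sets cyl_sets) auto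
  have Cm: "measure M (C v) = 1 / real (card Om)" if "v \<in> Om" for v
    using that measure_cyl[of N v K] unfolding C_def cardOm by (auto simp: Om_def PiE_iff)
  define g where "g \<omega> = (\<Sum>v\<in>Om. h v * indicator (C v) \<omega>)" for \<omega>
  have gm: "g \<in> borel_measurable M"
    unfolding g_def by (intro borel_measurable_sum borel_measurable_times borel_measurable_const
        borel_measurable_indicator Cs)
  have AE1: "AE \<omega> in M. \<forall>t\<in>{..<N}. fst \<omega> t < n" by (intro AE_finite_allI AE_fst) auto
  have AE2: "AE \<omega> in M. \<forall>j\<in>{..<K}. snd \<omega> j < m" by (intro AE_finite_allI AE_snd) auto
  have "AE \<omega> in M. h \<omega> = g \<omega>"
    using AE1 AE2
  proof eventually_elim
    fix \<omega> assume g1: "\<forall>t\<in>{..<N}. fst \<omega> t < n" and g2: "\<forall>j\<in>{..<K}. snd \<omega> j < m"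
    define r where "r = (restrict (fst \<omega>) {..<N}, restrict (snd \<omega>) {..<K})"
    have rO: "r \<in> Om" using g1 g2 by (auto simp: r_def Om_def)
    have ind: "indicator (C v) \<omega> = (if v = r then 1 else (0::real))" if "v \<in> Om" for v
    proof -
      have "\<omega> \<in> C v \<longleftrightarrow> v = r"
      proof
        assume "\<omega> \<in> C v"
        then have a: "\<forall>t<N. fst \<omega> t = fst v t" "\<forall>j<K. snd \<omega> j = snd v j" by (auto simp: C_def)
        have "fst v = restrict (fst \<omega>) {..<N}"
          using a(1) that by (auto simp: Om_def PiE_iff extensional_def fun_eq_iff)
        moreover have "snd v = restrict (snd \<omega>) {..<K}"
          using a(2) that by (auto simp: Om_def PiE_iff extensional_def fun_eq_iff)
        ultimately show "v = r" by (simp add: r_def prod_eq_iff)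
      next
        assume "v = r" then show "\<omega> \<in> C v" by (auto simp: C_def r_def mem_Times_iff)
      qed
      then show ?thesis by (simp add: indicator_def)
    qed
    have "g \<omega> = (\<Sum>v\<in>Om. h v * (if v = r then 1 else 0))"
      unfolding g_def by (intro sum.cong refl) (simp add: ind)
    also have "\<dots> = (\<Sum>v\<in>Om. if r = v then h v else 0)" by (intro sum.cong refl) auto
    also have "\<dots> = h r" using finOm rO by (simp only: sum.delta') simp
    also have "\<dots> = h \<omega>"
    proof -
      have "h \<omega> = h r" unfolding r_def by (rule dep) (use g1 g2 in auto)
      then show ?thesis by (rule sym)
    qed
    finally show "h \<omega> = g \<omega>" by simp
  qed
  then have "integral\<^sup>L M h = integral\<^sup>L M g" by (intro integral_cong_AE hm gm)
  also have "\<dots> = (\<Sum>v\<in>Om. integral\<^sup>L M (\<lambda>\<omega>. h v * indicator (C v) \<omega>))"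
    unfolding g_def by (rule Bochner_Integration.integral_sum) (auto intro!: integrable_mult_right integrable_real_indicator Cs simp: P.emeasure_finite less_top[symmetric])
  also have "\<dots> = (\<Sum>v\<in>Om. h v * measure M (C v))"
    by (intro sum.cong refl) (simp add: space_M)
  also have "\<dots> = (\<Sum>v\<in>Om. h v / real (card Om))"
    by (intro sum.cong refl) (simp add: Cm)
  finally show ?thesis by (simp add: Om_def sum_divide_distrib)
qed

lemma T_meas: "(\<lambda>\<omega>::(nat \<Rightarrow> nat) \<times> (nat \<Rightarrow> nat). (fst \<omega>, (snd \<omega>)(k := 0))) \<in> M \<rightarrow>\<^sub>M M"
proof -
  have c: "(\<lambda>\<omega>::(nat \<Rightarrow> nat) \<times> (nat \<Rightarrow> nat). ((snd \<omega>)(k := 0)) i) \<in> M \<rightarrow>\<^sub>M measure_pmf (pmf_of_set {..<m})" for i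
  proof (cases "i = k")
    case True
    then show ?thesis by simp
  next
    case False
    have "(\<lambda>\<omega>::(nat \<Rightarrow> nat) \<times> (nat \<Rightarrow> nat). snd \<omega> i) \<in> M \<rightarrow>\<^sub>M measure_pmf (pmf_of_set {..<m})"
      unfolding M_eq by (rule measurable_compose[OF measurable_snd measurable_component_singleton]) simp
    then show ?thesis using False by simp
  qed
  have g: "(\<lambda>\<omega>::(nat \<Rightarrow> nat) \<times> (nat \<Rightarrow> nat). (snd \<omega>)(k := 0)) \<in> M \<rightarrow>\<^sub>M PM m"
    using measurable_PiM_single'[where I=UNIV and M="\<lambda>_. measure_pmf (pmf_of_set {..<m})" and N=M
        and f="\<lambda>i \<omega>. ((snd \<omega>)(k := 0)) i"] c
    by (simp add: space_PiM fun_upd_def)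
  have f: "(\<lambda>\<omega>::(nat \<Rightarrow> nat) \<times> (nat \<Rightarrow> nat). fst \<omega>) \<in> M \<rightarrow>\<^sub>M PM n"
    unfolding M_eq by (rule measurable_fst)
  show ?thesis
    using measurable_Pair[OF f g] by (simp add: M_eq)
qed

lemma meas_down:
  fixes \<phi> :: "'a::real_vector \<Rightarrow> real"
  assumes "(\<lambda>\<omega>. \<phi> (snapshot G n \<eta> D m x0 \<omega> (Suc k))) \<in> borel_measurable M"
  shows "(\<lambda>\<omega>. \<phi> (snapshot G n \<eta> D m x0 \<omega> k)) \<in> borel_measurable M"
proof -
  have "(\<lambda>\<omega>. \<phi> (snapshot G n \<eta> D m x0 ((\<lambda>\<omega>. (fst \<omega>, (snd \<omega>)(k := 0))) \<omega>) (Suc k))) \<in> borel_measurable M"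
    by (rule measurable_compose[OF T_meas assms])
  moreover have "snapshot G n \<eta> D m x0 (fst \<omega>, (snd \<omega>)(k := 0)) (Suc k) = snapshot G n \<eta> D m x0 \<omega> k" for \<omega>
  proof -
    have "snapshot G n \<eta> D m x0 (fst \<omega>, (snd \<omega>)(k := 0)) k = snapshot G n \<eta> D m x0 \<omega> k"
      by (rule snap_dep_snd) auto
    then show ?thesis by simp
  qed
  ultimately show ?thesis by simp
qed

end

theorem theorem2:
  fixes f :: "nat \<Rightarrow> real ^ 'd \<Rightarrow> real"
    and G :: "nat \<Rightarrow> real ^ 'd \<Rightarrow> real ^ 'd"
    and e :: "nat \<Rightarrow> 'd set"
    and n m \<tau> :: nat
    and L lam \<eta> \<Delta> \<theta>s :: real
    and xstar x0 :: "real ^ 'd"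
    and D :: "nat \<Rightarrow> nat"
  assumes n_pos: "n \<ge> 1"
    and m_pos: "m \<ge> 1"
    and convex: "\<And>i. i < n \<Longrightarrow> convex_on UNIV (f i)"
    and grad: "\<And>i x. i < n \<Longrightarrow> (f i has_derivative (\<lambda>h. G i x \<bullet> h)) (at x)"
    and lipschitz: "\<And>i x y. i < n \<Longrightarrow> norm (G i x - G i y) \<le> L * norm (x - y)"
    and strongly: "strongly_convex_on UNIV (avg_fun f n) lam"
    and lam_pos: "lam > 0"
    and minimizer: "\<And>x. avg_fun f n xstar \<le> avg_fun f n x"
    and sparse: "\<And>i x y. i < n \<Longrightarrow> (\<forall>j\<in>e i. x $ j = y $ j) \<Longrightarrow> f i x = f i y"
    and Delta: "\<Delta> \<in> {c. \<forall>x::real ^ 'd.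
                  (1 / real n) * (\<Sum>i<n. \<Sum>j\<in>e i. (x $ j)\<^sup>2) \<le> c * (norm x)\<^sup>2}"
    and Delta_least: "\<And>c. (\<forall>x::real ^ 'd.
                  (1 / real n) * (\<Sum>i<n. \<Sum>j\<in>e i. (x $ j)\<^sup>2) \<le> c * (norm x)\<^sup>2) \<Longrightarrow> \<Delta> \<le> c"
    and delay: "\<And>t. (t div m) * m \<le> D t \<and> D t \<le> t \<and> t - D t \<le> \<tau>"
    and eta_pos: "\<eta> > 0"
    and stab: "2 * L\<^sup>2 * \<Delta> * \<eta>\<^sup>2 * (real \<tau>)\<^sup>2 < 1"
    and denom_pos: "1 - 4 * L * ((\<eta> + L * \<Delta> * (real \<tau>)\<^sup>2 * \<eta>\<^sup>2) / (1 - 2 * L\<^sup>2 * \<Delta> * \<eta>\<^sup>2 * (real \<tau>)\<^sup>2)) > 0"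
    and theta_def: "\<theta>s = (1 / (lam * \<eta> * real m)
                 + 4 * L * ((\<eta> + L * \<Delta> * (real \<tau>)\<^sup>2 * \<eta>\<^sup>2) / (1 - 2 * L\<^sup>2 * \<Delta> * \<eta>\<^sup>2 * (real \<tau>)\<^sup>2)))
               / (1 - 4 * L * ((\<eta> + L * \<Delta> * (real \<tau>)\<^sup>2 * \<eta>\<^sup>2) / (1 - 2 * L\<^sup>2 * \<Delta> * \<eta>\<^sup>2 * (real \<tau>)\<^sup>2)))"
    and theta_bounds: "0 < \<theta>s" "\<theta>s < 1"
  shows "\<forall>k. (\<integral>\<omega>. avg_fun f n (snapshot G n \<eta> D m x0 \<omega> (Suc k)) - avg_fun f n xstar \<partial>svrg_space n m)
           \<le> \<theta>s * (\<integral>\<omega>. avg_fun f n (snapshot G n \<eta> D m x0 \<omega> k) - avg_fun f n xstar \<partial>svrg_space n m)"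
proof -
  have Delta': "\<And>x::real ^ 'd. (1 / real n) * (\<Sum>i<n. \<Sum>j\<in>e i. (x $ j)\<^sup>2) \<le> \<Delta> * (norm x)\<^sup>2"
    using Delta by simp
  interpret sett2 f G e n L lam \<Delta> xstar m \<tau> \<eta> D x0
    by (unfold_locales) (use n_pos convex grad lipschitz strongly minimizer sparse Delta' m_pos delay eta_pos lam_pos in auto)
  interpret ms n m by unfold_locales (use n_pos m_pos in auto)
  show ?thesis
  proof
    fix k
    define hS where "hS \<omega> = avg_fun f n (snapshot G n \<eta> D m x0 \<omega> (Suc k)) - avg_fun f n xstar" for \<omega>
    define hK where "hK \<omega> = avg_fun f n (snapshot G n \<eta> D m x0 \<omega> k) - avg_fun f n xstar" for \<omega>
    have hK0: "0 \<le> integral\<^sup>L M hK"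
      by (rule integral_nonneg_AE) (simp add: hK_def minimizer)
    show "(\<integral>\<omega>. avg_fun f n (snapshot G n \<eta> D m x0 \<omega> (Suc k)) - avg_fun f n xstar \<partial>svrg_space n m)
           \<le> \<theta>s * (\<integral>\<omega>. avg_fun f n (snapshot G n \<eta> D m x0 \<omega> k) - avg_fun f n xstar \<partial>svrg_space n m)"
    proof (cases "hS \<in> borel_measurable M")
      case False
      then have "\<not> integrable M hS" by auto
      then have "integral\<^sup>L M hS = 0" by (rule not_integrable_integral_eq)
      moreover have "0 \<le> \<theta>s * integral\<^sup>L M hK" using theta_bounds hK0 by simp
      ultimately show ?thesis by (simp add: hS_def[abs_def] hK_def[abs_def])
    next
      case True
      have hKm: "hK \<in> borel_measurable M"
        unfolding hK_def[abs_def]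
        by (rule meas_down[where \<phi>="\<lambda>x. avg_fun f n x - avg_fun f n xstar"]) (use True in \<open>simp add: hS_def[abs_def]\<close>)
      have iS: "integral\<^sup>L M hS = (\<Sum>v\<in>Om k. hS v) / real (card (Om k))"
        unfolding Om_def
      proof (rule integral_finite[OF True])
        fix \<omega> :: "(nat \<Rightarrow> nat) \<times> (nat \<Rightarrow> nat)"
        assume a: "\<forall>t<Suc k * m. fst \<omega> t < n" "\<forall>j<Suc k. snd \<omega> j < m"
        have "snapshot G n \<eta> D m x0 \<omega> (Suc k) =
            snapshot G n \<eta> D m x0 (restrict (fst \<omega>) {..<Suc k * m}, restrict (snd \<omega>) {..<Suc k}) (Suc k)"
          by (rule snap_dep) (use a in auto)
        then show "hS \<omega> = hS (restrict (fst \<omega>) {..<Suc k * m}, restrict (snd \<omega>) {..<Suc k})"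
          by (simp add: hS_def)
      qed
      have iK: "integral\<^sup>L M hK = (\<Sum>v\<in>Om k. hK v) / real (card (Om k))"
        unfolding Om_def
      proof (rule integral_finite[OF hKm])
        fix \<omega> :: "(nat \<Rightarrow> nat) \<times> (nat \<Rightarrow> nat)"
        assume a: "\<forall>t<Suc k * m. fst \<omega> t < n" "\<forall>j<Suc k. snd \<omega> j < m"
        have "snapshot G n \<eta> D m x0 \<omega> k =
            snapshot G n \<eta> D m x0 (restrict (fst \<omega>) {..<Suc k * m}, restrict (snd \<omega>) {..<Suc k}) k"
          by (rule snap_dep) (use a in auto)
        then show "hK \<omega> = hK (restrict (fst \<omega>) {..<Suc k * m}, restrict (snd \<omega>) {..<Suc k})"
          by (simp add: hK_def)
      qed
      have main: "(\<Sum>v\<in>Om k. hS v) \<le> \<theta>s * (\<Sum>v\<in>Om k. hK v)"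
        using omega_main[OF stab denom_pos, of k] unfolding theta_def hS_def hK_def Xs_def .
      have "integral\<^sup>L M hS \<le> \<theta>s * (\<Sum>v\<in>Om k. hK v) / real (card (Om k))"
        unfolding iS by (intro divide_right_mono main) auto
      also have "\<dots> = \<theta>s * integral\<^sup>L M hK" by (simp add: iK)
      finally show ?thesis by (simp add: hS_def[abs_def] hK_def[abs_def])
    qed
  qed
qed

end
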